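(* Suppose Assumptions A, B($\gamma$), C($\gamma$) are satisfied for some $\gamma\in(0,1]$. Let $\phi\in C^\infty_0(\mathbb{R}^d)$, $\tau\in(0,\infty)$, and let $u^m,u\in\mathbb{W}^1_p(-\infty,\infty)$, $m=1,2,\dots$, be such that $u^m\to u$ weakly in $\mathbb{W}^1_p(-\infty,\infty)$. For $m=1,2,\dots$ define $\chi_m(t)=(-m)\vee t\wedge m$, $\mathfrak{b}^i_{mt}=\chi_m(\mathfrak{b}^i_t)$, $b^i_{mt}=\chi_m(b^i_t)$, $c_{mt}=\chi_m(c_t)$. Then, as $m\to\infty$, the functions $$t\mapsto\int_0^t(b^i_{ms}D_iu^m_s,\phi)\,ds,\quad t\mapsto\int_0^t(\mathfrak{b}^i_{ms}u^m_s,D_i\phi)\,ds,\quad t\mapsto\int_0^t(c_{ms}u^m_s,\phi)\,ds$$ converge weakly in $\mathcal{L}_p([-\tau,\tau])$ to $$t\mapsto\int_0^t(b^i_sD_iu_s,\phi)\,ds,\quad t\mapsto\int_0^t(\mathfrak{b}^i_su_s,D_i\phi)\,ds,\quad t\mapsto\int_0^t(c_su_s,\phi)\,ds,$$ respectively.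
   Context: Fix $d\ge1$, $p\in(1,\infty)$, $p'=p/(p-1)$. $\mathcal{L}_p=\mathcal{L}_p(\mathbb{R}^d)$; $W^1_p$ the Sobolev space of $u\in\mathcal{L}_p$ with $Du\in\mathcal{L}_p$; $\mathbb{W}^1_p(-\infty,\infty)=\mathcal{L}_p(\mathbb{R};W^1_p)$; $(\cdot,\cdot)$ the $L_2(\mathbb{R}^d)$ pairing; $D_i=\partial/\partial x^i$; summation convention. $B_\rho(x)$ open ball. Coefficients $a^{ij}_t(x),\mathfrak{b}^i_t(x),b^i_t(x),c_t(x)$ on $\mathbb{R}\times\mathbb{R}^d$; $\mathfrak{b}=(\mathfrak{b}^i)$, $b=(b^i)$. Fixed constants: $K\ge0$, $\rho_0,\rho_1\in(0,1]$, $q=q(d,p)$ with $q>\min(d,p)$, $q>\min(d,p')$, $q\ge\max(d,p,p')$. Assumption A: (i) $a,\mathfrak{b},b,c$ real-valued Borel measurable, $c\ge0$; (ii) there is $\delta>0$ with $a^{ij}\xi^i\xi^j\ge\delta|\xi|^2$, $|a^{ij}|\le\delta^{-1}$; (iii) for every $x$, $t\mapsto\int_{B_1(0)}(|\mathfrak{b}_t(x+y)|+|b_t(x+y)|+c_t(x+y))\,dy$ is locally integrable to the power $p'$ on $\mathbb{R}$. Assumption B($\gamma$): for all $(t,x)$, $\int_{B_{\rho_1}(x)}\int_{B_{\rho_1}(x)}(|\mathfrak{b}_t(y)-\mathfrak{b}_t(z)|^q+|b_t(y)-b_t(z)|^q+|c_t(y)-c_t(z)|^q)\,dy\,dz\le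 K1_{q>d}+\rho_1^d\gamma$. Assumption C($\gamma$): for all $\rho\in(0,\rho_0]$, $s\in\mathbb{R}$, $i,j$: $\rho^{-2d-2}\int_s^{s+\rho^2}\sup_{x}\int_{B_\rho(x)}\int_{B_\rho(x)}|a^{ij}_t(y)-a^{ij}_t(z)|\,dy\,dz\,dt\le\gamma$. *)

theory Defs
  imports "HOL-Analysis.Analysis"
begin

definition partial_deriv :: "'n::finite \<Rightarrow> (real^'n \<Rightarrow> real) \<Rightarrow> real^'n \<Rightarrow> real" where
  "partial_deriv i f x = frechet_derivative f (at x) (axis i 1)"

coinductive smooth_fun :: "(real^'n::finite \<Rightarrow> real) \<Rightarrow> bool" where
  "(\<forall>x. f differentiable (at x)) \<Longrightarrow> (\<forall>i. smooth_fun (partial_deriv i f)) \<Longrightarrow> smooth_fun f"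

definition test_fun :: "(real^'n::finite \<Rightarrow> real) \<Rightarrow> bool" where
  "test_fun f \<longleftrightarrow> smooth_fun f \<and> compact (closure {x. f x \<noteq> 0})"

definition Lp :: "real \<Rightarrow> 'a measure \<Rightarrow> ('a \<Rightarrow> real) \<Rightarrow> bool" where
  "Lp p M f \<longleftrightarrow> f \<in> borel_measurable M \<and> integrable M (\<lambda>x. \<bar>f x\<bar> powr p)"

definition weak_conv_Lp :: "real \<Rightarrow> 'a measure \<Rightarrow> (nat \<Rightarrow> 'a \<Rightarrow> real) \<Rightarrow> ('a \<Rightarrow> real) \<Rightarrow> bool" where
  "weak_conv_Lp p M fs f \<longleftrightarrow> (\<forall>m. Lp p M (fs m)) \<and> Lp p M f \<and>
     (\<forall>g. Lp (p / (p - 1)) M g \<longrightarrow>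
        (\<lambda>m. \<integral>x. fs m x * g x \<partial>M) \<longlonglongrightarrow> (\<integral>x. f x * g x \<partial>M))"

definition weak_deriv :: "(real^'n::finite \<Rightarrow> real) \<Rightarrow> ('n \<Rightarrow> real^'n \<Rightarrow> real) \<Rightarrow> bool" where
  "weak_deriv f Df \<longleftrightarrow> (\<forall>i. \<forall>\<psi>. test_fun \<psi> \<longrightarrow>
     integrable lborel (\<lambda>x. f x * partial_deriv i \<psi> x) \<and>
     integrable lborel (\<lambda>x. Df i x * \<psi> x) \<and>
     (\<integral>x. f x * partial_deriv i \<psi> x \<partial>lborel) = - (\<integral>x. Df i x * \<psi> x \<partial>lborel))"

text \<open>u belongs to W^1_p(-infinity,infinity) = L_p(R; W^1_p(R^d)), with (weak) spatial gradient Du: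
  u and Du are jointly measurable p-th power integrable on R x R^d, and for a.e. t,
  Du t is the weak gradient of u t.\<close>
definition WW1p :: "real \<Rightarrow> (real \<Rightarrow> real^'n::finite \<Rightarrow> real) \<Rightarrow> ('n \<Rightarrow> real \<Rightarrow> real^'n \<Rightarrow> real) \<Rightarrow> bool" where
  "WW1p p u Du \<longleftrightarrow> Lp p (lborel \<Otimes>\<^sub>M lborel) (\<lambda>(t, x). u t x) \<and>
     (\<forall>i. Lp p (lborel \<Otimes>\<^sub>M lborel) (\<lambda>(t, x). Du i t x)) \<and>
     (AE t in lborel. weak_deriv (u t) (\<lambda>i. Du i t))"

definition weak_conv_WW1p :: "real \<Rightarrow> (nat \<Rightarrow> real \<Rightarrow> real^'n::finite \<Rightarrow> real) \<Rightarrow> (nat \<Rightarrow> 'n \<Rightarrow> real \<Rightarrow> real^'n \<Rightarrow> real)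
     \<Rightarrow> (real \<Rightarrow> real^'n \<Rightarrow> real) \<Rightarrow> ('n \<Rightarrow> real \<Rightarrow> real^'n \<Rightarrow> real) \<Rightarrow> bool" where
  "weak_conv_WW1p p us Dus u Du \<longleftrightarrow>
     (\<forall>m. WW1p p (us m) (Dus m)) \<and> WW1p p u Du \<and>
     weak_conv_Lp p (lborel \<Otimes>\<^sub>M lborel) (\<lambda>m (t, x). us m t x) (\<lambda>(t, x). u t x) \<and>
     (\<forall>i. weak_conv_Lp p (lborel \<Otimes>\<^sub>M lborel) (\<lambda>m (t, x). Dus m i t x) (\<lambda>(t, x). Du i t x))"

definition enn_powr :: "ennreal \<Rightarrow> real \<Rightarrow> ennreal" where
  "enn_powr e r = (if e = \<infinity> then \<infinity> else ennreal (enn2real e powr r))"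

definition chi :: "nat \<Rightarrow> real \<Rightarrow> real" where
  "chi m t = max (- real m) (min t (real m))"

text \<open>Assumption A. Coefficients: a i j t x, frb i t x (fraktur b), b i t x, c t x.\<close>
definition AssumptionA :: "real \<Rightarrow> ('n::finite \<Rightarrow> 'n \<Rightarrow> real \<Rightarrow> real^'n \<Rightarrow> real) \<Rightarrow> ('n \<Rightarrow> real \<Rightarrow> real^'n \<Rightarrow> real)
     \<Rightarrow> ('n \<Rightarrow> real \<Rightarrow> real^'n \<Rightarrow> real) \<Rightarrow> (real \<Rightarrow> real^'n \<Rightarrow> real) \<Rightarrow> bool" where
  "AssumptionA p a frb b c \<longleftrightarrow>
     (\<forall>i j. (\<lambda>(t, x). a i j t x) \<in> borel_measurable borel) \<and>
     (\<forall>i. (\<lambda>(t, x). frb i t x) \<in> borel_measurable borel) \<and>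
     (\<forall>i. (\<lambda>(t, x). b i t x) \<in> borel_measurable borel) \<and>
     (\<lambda>(t, x). c t x) \<in> borel_measurable borel \<and>
     (\<forall>t x. c t x \<ge> 0) \<and>
     (\<exists>\<delta>>0. (\<forall>t x (\<xi>::real^'n). (\<Sum>i\<in>UNIV. \<Sum>j\<in>UNIV. a i j t x * \<xi>$i * \<xi>$j) \<ge> \<delta> * (norm \<xi>)\<^sup>2) \<and>
            (\<forall>i j t x. \<bar>a i j t x\<bar> \<le> 1 / \<delta>)) \<and>
     (\<forall>x. \<forall>T1 T2. (\<integral>\<^sup>+ t\<in>{T1..T2}.
         enn_powr (\<integral>\<^sup>+ y\<in>ball 0 1. ennreal (norm (\<chi> i. frb i t (x + y)) + norm (\<chi> i. b i t (x + y)) + c t (x + y)) \<partial>lborel)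
                  (p / (p - 1)) \<partial>lborel) < \<infinity>)"

text \<open>Assumption B(gamma); d = CARD('n).\<close>
definition AssumptionB :: "real \<Rightarrow> real \<Rightarrow> real \<Rightarrow> ('n::finite \<Rightarrow> real \<Rightarrow> real^'n \<Rightarrow> real)
     \<Rightarrow> ('n \<Rightarrow> real \<Rightarrow> real^'n \<Rightarrow> real) \<Rightarrow> (real \<Rightarrow> real^'n \<Rightarrow> real) \<Rightarrow> real \<Rightarrow> bool" where
  "AssumptionB q K \<rho>1 frb b c \<gamma> \<longleftrightarrow>
     (\<forall>t x. (\<integral>\<^sup>+ y\<in>ball x \<rho>1. \<integral>\<^sup>+ z\<in>ball x \<rho>1.
         ennreal (norm ((\<chi> i. frb i t y) - (\<chi> i. frb i t z)) powr q
                + norm ((\<chi> i. b i t y) - (\<chi> i. b i t z)) powr q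
                + \<bar>c t y - c t z\<bar> powr q) \<partial>lborel \<partial>lborel)
       \<le> ennreal (K * (if q > real CARD('n) then 1 else 0) + \<rho>1 ^ CARD('n) * \<gamma>))"

definition AssumptionC :: "real \<Rightarrow> ('n::finite \<Rightarrow> 'n \<Rightarrow> real \<Rightarrow> real^'n \<Rightarrow> real) \<Rightarrow> real \<Rightarrow> bool" where
  "AssumptionC \<rho>0 a \<gamma> \<longleftrightarrow>
     (\<forall>\<rho>\<in>{0<..\<rho>0}. \<forall>s. \<forall>i j.
        ennreal (\<rho> powr (- 2 * real CARD('n) - 2)) *
        (\<integral>\<^sup>+ t\<in>{s..s + \<rho>\<^sup>2}. (SUP x. \<integral>\<^sup>+ y\<in>ball x \<rho>. \<integral>\<^sup>+ z\<in>ball x \<rho>.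
              ennreal \<bar>a i j t y - a i j t z\<bar> \<partial>lborel \<partial>lborel) \<partial>lborel)
        \<le> ennreal \<gamma>)"

end

theory Submission
  imports Defs "HOL-Analysis.Analysis"
begin
lemma tail_to_0:
  fixes G :: "'a \<Rightarrow> real"
  assumes G: "integrable N G" and E: "\<And>n. E n \<in> sets N"
    and dec: "\<And>m n. m \<le> n \<Longrightarrow> E n \<subseteq> E m" and emp: "\<And>z. \<exists>n. z \<notin> E n"
  shows "(\<lambda>n. \<integral>z. indicator (E n) z * G z \<partial>N) \<longlonglongrightarrow> 0"
proof -
  have "(\<lambda>n. \<integral>z. indicator (E n) z * G z \<partial>N) \<longlonglongrightarrow> (\<integral>z. 0 \<partial>N)"
  proof (rule integral_dominated_convergence[where w="\<lambda>z. \<bar>G z\<bar>"])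
    show "(\<lambda>z. 0::real) \<in> borel_measurable N" by simp
    show "(\<lambda>z. indicator (E n) z * G z) \<in> borel_measurable N" for n
      using G E by (intro borel_measurable_times borel_measurable_indicator) auto
    show "integrable N (\<lambda>z. \<bar>G z\<bar>)" using G by auto
    show "AE z in N. (\<lambda>n. indicator (E n) z * G z) \<longlonglongrightarrow> 0"
    proof (rule AE_I2)
      fix z obtain n0 where "z \<notin> E n0" using emp by blast
      then have "eventually (\<lambda>n. indicator (E n) z * G z = 0) sequentially"
        using dec unfolding eventually_sequentially by (metis indicator_simps(2) mult_zero_left subsetD)
      then show "(\<lambda>n. indicator (E n) z * G z) \<longlonglongrightarrow> 0" by (rule tendsto_eventually)
    qed
    show "AE z in N. norm (indicator (E n) z * G z) \<le> \<bar>G z\<bar>" for n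
      by (auto simp: indicator_def)
  qed
  then show ?thesis by simp
qed

lemma intb:
  fixes A g r :: "'a \<Rightarrow> real"
  assumes "integrable N (\<lambda>z. A z * r z)" "A \<in> borel_measurable N" "g \<in> borel_measurable N"
    "\<And>z. \<bar>g z\<bar> \<le> \<bar>r z\<bar>"
  shows "integrable N (\<lambda>z. A z * g z)"
proof (rule Bochner_Integration.integrable_bound[OF assms(1)])
  show "(\<lambda>z. A z * g z) \<in> borel_measurable N" using assms by measurable
  show "AE z in N. norm (A z * g z) \<le> norm (A z * r z)"
    using assms(4) by (intro AE_I2) (simp add: abs_mult mult_left_mono)
qed

lemma intbnd:
  fixes A g r :: "'a \<Rightarrow> real"
  assumes "integrable N (\<lambda>z. A z * r z)" "A \<in> borel_measurable N" "g \<in> borel_measurable N"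
    "\<And>z. \<bar>g z\<bar> \<le> indicator S z * \<bar>r z\<bar>" "S \<in> sets N"
  shows "\<bar>\<integral>z. A z * g z \<partial>N\<bar> \<le> (\<integral>z. indicator S z * \<bar>A z * r z\<bar> \<partial>N)"
proof -
  have g: "\<bar>g z\<bar> \<le> \<bar>r z\<bar>" for z using assms(4)[of z] by (cases "z \<in> S") auto
  have i1: "integrable N (\<lambda>z. A z * g z)" by (rule intb[OF assms(1-3) g])
  have i2: "integrable N (\<lambda>z. indicator S z * \<bar>A z * r z\<bar>)"
    using integrable_real_mult_indicator[OF assms(5) integrable_abs[OF assms(1)]] by (simp add: mult.commute)
  have "\<bar>\<integral>z. A z * g z \<partial>N\<bar> \<le> (\<integral>z. \<bar>A z * g z\<bar> \<partial>N)" by (rule integral_abs_bound)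
  also have "\<dots> \<le> (\<integral>z. indicator S z * \<bar>A z * r z\<bar> \<partial>N)"
  proof (rule integral_mono)
    show "integrable N (\<lambda>z. \<bar>A z * g z\<bar>)" using i1 by auto
    show "integrable N (\<lambda>z. indicator S z * \<bar>A z * r z\<bar>)" by (rule i2)
    fix z show "\<bar>A z * g z\<bar> \<le> indicator S z * \<bar>A z * r z\<bar>"
      using assms(4)[of z] by (auto simp: abs_mult indicator_def intro: mult_left_mono)
  qed
  finally show ?thesis .
qed

lemma glide:
  fixes Vs :: "nat \<Rightarrow> 'a \<Rightarrow> real" and V r :: "'a \<Rightarrow> real" and \<rho> :: "nat \<Rightarrow> 'a \<Rightarrow> real"
    and E :: "nat \<Rightarrow> 'a set"
  assumes wc: "\<And>w. w \<in> borel_measurable N \<Longrightarrow> (\<And>z. \<bar>w z\<bar> \<le> \<bar>r z\<bar>) \<Longrightarrow>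
        (\<lambda>m. \<integral>z. Vs m z * w z \<partial>N) \<longlonglongrightarrow> (\<integral>z. V z * w z \<partial>N)"
    and intm: "\<And>m. integrable N (\<lambda>z. Vs m z * r z)"
    and int0: "integrable N (\<lambda>z. V z * r z)"
    and Vsm: "\<And>m. Vs m \<in> borel_measurable N" and Vm: "V \<in> borel_measurable N"
    and \<rho>m: "\<And>m. \<rho> m \<in> borel_measurable N" and \<rho>b: "\<And>m z. \<bar>\<rho> m z\<bar> \<le> \<bar>r z\<bar>"
    and \<rho>E: "\<And>m z. z \<notin> E m \<Longrightarrow> \<rho> m z = 0"
    and E: "\<And>n. E n \<in> sets N" and dec: "\<And>m n. m \<le> n \<Longrightarrow> E n \<subseteq> E m"
    and emp: "\<And>z. \<exists>n. z \<notin> E n"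
  shows "(\<lambda>m. \<integral>z. Vs m z * \<rho> m z \<partial>N) \<longlonglongrightarrow> 0"
proof (rule ccontr)
  define a where "a m = (\<integral>z. Vs m z * \<rho> m z \<partial>N)" for m
  assume "\<not> ?thesis"
  then have "\<not> a \<longlonglongrightarrow> 0" unfolding a_def .
  then obtain \<epsilon> where \<epsilon>: "\<epsilon> > 0" and freq: "\<And>no. \<exists>n\<ge>no. \<epsilon> \<le> \<bar>a n\<bar>"
    unfolding LIMSEQ_iff by (auto simp: not_less)
  define e where "e = \<epsilon> / 8"
  have e: "e > 0" using \<epsilon> by (simp add: e_def)
  define TV where "TV n = (\<integral>z. indicator (E n) z * \<bar>V z * r z\<bar> \<partial>N)" for n
  define TVs where "TVs m n = (\<integral>z. indicator (E n) z * \<bar>Vs m z * r z\<bar> \<partial>N)" for m n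
  have TV0: "TV \<longlonglongrightarrow> 0" unfolding TV_def
    by (rule tail_to_0[OF _ E dec emp]) (use int0 in auto)
  have TVs0: "(\<lambda>n. TVs m n) \<longlonglongrightarrow> 0" for m unfolding TVs_def
    by (rule tail_to_0[OF _ E dec emp]) (use intm in auto)
  have evTV: "\<exists>N0. \<forall>n\<ge>N0. TV n < e"
    using TV0 e unfolding LIMSEQ_iff by (metis real_norm_def abs_less_iff diff_zero)
  have evTVs: "\<exists>N0. \<forall>n\<ge>N0. TVs m n < e" for m
    using TVs0[of m] e unfolding LIMSEQ_iff by (metis real_norm_def abs_less_iff diff_zero)
  have evw: "\<exists>N0. \<forall>n\<ge>N0. \<bar>(\<integral>z. Vs n z * S z \<partial>N) - (\<integral>z. V z * S z \<partial>N)\<bar> < e"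
    if "S \<in> borel_measurable N" "\<And>z. \<bar>S z\<bar> \<le> \<bar>r z\<bar>" for S
    using wc[OF that] e unfolding LIMSEQ_iff by (metis real_norm_def)
  define P where "P k x \<longleftrightarrow> (case x of (m, n, S) \<Rightarrow>
      \<epsilon> \<le> \<bar>a m\<bar> \<and> \<bar>(\<integral>z. Vs m z * S z \<partial>N) - (\<integral>z. V z * S z \<partial>N)\<bar> < e \<and> TV m < e \<and>
      S \<in> borel_measurable N \<and> (\<forall>z. \<bar>S z\<bar> \<le> \<bar>r z\<bar>) \<and> (\<forall>z. z \<in> E n \<longrightarrow> S z = 0) \<and> n \<le> m)"
    for k :: nat and x :: "nat \<times> nat \<times> ('a \<Rightarrow> real)"
  define Q where "Q k x y \<longleftrightarrow> (case x of (m, n, S) \<Rightarrow> case y of (m', n', S') \<Rightarrow>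
      m < n' \<and> n' \<le> m' \<and> S' = (\<lambda>z. S z + \<rho> m z * indicator (- E n') z) \<and> TVs m n' < e \<and> TV n' < e)"
    for k :: nat and x y :: "nat \<times> nat \<times> ('a \<Rightarrow> real)"
  have "\<exists>f. \<forall>k. P k (f k) \<and> Q k (f k) (f (Suc k))"
  proof (rule dependent_nat_choice)
    obtain N0 where N0: "\<And>n. n \<ge> N0 \<Longrightarrow> TV n < e" using evTV by blast
    obtain m where m: "m \<ge> N0" "\<epsilon> \<le> \<bar>a m\<bar>" using freq by blast
    show "\<exists>x. P 0 x"
      by (rule exI[of _ "(m, 0, \<lambda>_. 0)"]) (use m N0 e in \<open>auto simp: P_def\<close>)
  next
    fix x k assume Px: "P k x"
    obtain m n S where x: "x = (m, n, S)" by (cases x) auto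
    have S: "S \<in> borel_measurable N" "\<And>z. \<bar>S z\<bar> \<le> \<bar>r z\<bar>" "\<And>z. z \<in> E n \<Longrightarrow> S z = 0" "n \<le> m"
      using Px by (auto simp: P_def x)
    obtain N1 where N1: "\<And>n. n \<ge> N1 \<Longrightarrow> TV n < e" using evTV by blast
    obtain N2 where N2: "\<And>n. n \<ge> N2 \<Longrightarrow> TVs m n < e" using evTVs by blast
    define n' where "n' = max (Suc m) (max N1 N2)"
    have n': "m < n'" "TV n' < e" "TVs m n' < e" using N1 N2 by (auto simp: n'_def)
    define S' where "S' = (\<lambda>z. S z + \<rho> m z * indicator (- E n') z)"
    have ic: "(\<lambda>z. indicator (- E n') z::real) = (\<lambda>z. 1 - indicator (E n') z)"
      by (auto simp: indicator_def fun_eq_iff)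
    have "(\<lambda>z. indicator (- E n') z::real) \<in> borel_measurable N" unfolding ic using E by measurable
    then have S'm: "S' \<in> borel_measurable N" unfolding S'_def
      using S(1) \<rho>m by (intro borel_measurable_add borel_measurable_times) auto
    have S'b: "\<bar>S' z\<bar> \<le> \<bar>r z\<bar>" for z
    proof (cases "z \<in> E m")
      case True
      then have "z \<in> E n" using dec[OF S(4)] by auto
      then show ?thesis using S(3) \<rho>b[of m z] by (auto simp: S'_def indicator_def)
    next
      case False
      then show ?thesis using \<rho>E[OF False] S(2)[of z] by (simp add: S'_def)
    qed
    have S'E: "S' z = 0" if "z \<in> E n'" for z
    proof -
      have "z \<in> E n" using that dec[of n n'] n'(1) S(4) by auto
      then show ?thesis using S(3) that by (simp add: S'_def)
    qed
    obtain N3 where N3: "\<And>k. k \<ge> N3 \<Longrightarrow> \<bar>(\<integral>z. Vs k z * S' z \<partial>N) - (\<integral>z. V z * S' z \<partial>N)\<bar> < e"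
      using evw[OF S'm S'b] by blast
    obtain m' where m': "m' \<ge> max n' (max N1 N3)" "\<epsilon> \<le> \<bar>a m'\<bar>" using freq by blast
    show "\<exists>y. P (Suc k) y \<and> Q k x y"
      apply (rule exI[of _ "(m', n', S')"])
      using m' N1[of m'] N3[of m'] S'm S'b S'E n' unfolding P_def Q_def x
      by (auto simp: S'_def)
  qed
  then obtain f where f: "\<And>k. P k (f k)" "\<And>k. Q k (f k) (f (Suc k))" by blast
  define mk where "mk k = fst (f k)" for k
  define nk where "nk k = fst (snd (f k))" for k
  define Sk where "Sk k = snd (snd (f k))" for k
  have fk: "f k = (mk k, nk k, Sk k)" for k by (simp add: mk_def nk_def Sk_def)
  have Pk: "\<epsilon> \<le> \<bar>a (mk k)\<bar>" "\<bar>(\<integral>z. Vs (mk k) z * Sk k z \<partial>N) - (\<integral>z. V z * Sk k z \<partial>N)\<bar> < e"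
    "TV (mk k) < e" "Sk k \<in> borel_measurable N" "\<And>z. \<bar>Sk k z\<bar> \<le> \<bar>r z\<bar>"
    "\<And>z. z \<in> E (nk k) \<Longrightarrow> Sk k z = 0" "nk k \<le> mk k" for k
    using f(1)[of k] unfolding fk P_def by auto
  have Qk: "mk k < nk (Suc k)" "nk (Suc k) \<le> mk (Suc k)"
    "Sk (Suc k) = (\<lambda>z. Sk k z + \<rho> (mk k) z * indicator (- E (nk (Suc k))) z)"
    "TVs (mk k) (nk (Suc k)) < e" "TV (nk (Suc k)) < e" for k
    using f(2)[of k] unfolding fk Q_def by auto
  have mono_mk: "strict_mono mk"
    by (rule strict_monoI_Suc) (use Qk(1,2) less_le_trans in blast)
  have mk_ge: "k \<le> mk k" for k using mono_mk by (rule strict_mono_imp_increasing)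
  have stab: "Sk j z = Sk (Suc k) z" if "Suc k \<le> j" "z \<notin> E (nk (Suc k))" for j k z
    using that(1)
  proof (induction j rule: dec_induct)
    case base then show ?case by simp
  next
    case (step j)
    have "mk (Suc k) \<le> mk j" using step(1) mono_mk by (simp add: strict_mono_less_eq)
    then have "nk (Suc k) \<le> mk j" using Qk(2)[of k] by linarith
    then have "z \<notin> E (mk j)" using dec[of "nk (Suc k)" "mk j"] that(2) by auto
    then show ?case using step(3) Qk(3)[of j] \<rho>E by simp
  qed
  define w where "w z = lim (\<lambda>j. Sk j z)" for z
  have wk: "w z = Sk (Suc k) z" if "z \<notin> E (nk (Suc k))" for z k
  proof -
    have "eventually (\<lambda>j. Sk j z = Sk (Suc k) z) sequentially"
      unfolding eventually_sequentially using stab[OF _ that] by blast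
    then have "(\<lambda>j. Sk j z) \<longlonglongrightarrow> Sk (Suc k) z" by (rule tendsto_eventually)
    then show ?thesis unfolding w_def by (rule limI)
  qed
  have exk: "\<exists>k. z \<notin> E (nk (Suc k))" for z
  proof -
    obtain n0 where "z \<notin> E n0" using emp by blast
    moreover have "n0 \<le> nk (Suc n0)" using mk_ge[of n0] Qk(1)[of n0] by linarith
    ultimately show ?thesis using dec by blast
  qed
  have wlim: "(\<lambda>j. Sk j z) \<longlonglongrightarrow> w z" for z
  proof -
    obtain k where k: "z \<notin> E (nk (Suc k))" using exk by blast
    have "eventually (\<lambda>j. Sk j z = w z) sequentially"
      unfolding eventually_sequentially using stab[OF _ k] wk[OF k] by metis
    then show ?thesis by (rule tendsto_eventually)
  qed
  have wm: "w \<in> borel_measurable N"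
    by (rule borel_measurable_LIMSEQ_real[OF wlim Pk(4)])
  have wb: "\<bar>w z\<bar> \<le> \<bar>r z\<bar>" for z
  proof -
    obtain k where k: "z \<notin> E (nk (Suc k))" using exk by blast
    show ?thesis using wk[OF k] Pk(5) by simp
  qed
  have conv: "(\<lambda>k. \<integral>z. Vs (mk k) z * w z \<partial>N) \<longlonglongrightarrow> (\<integral>z. V z * w z \<partial>N)"
    using LIMSEQ_subseq_LIMSEQ[OF wc[OF wm wb] mono_mk] by (simp add: o_def)
  have big: "2 * e \<le> \<bar>(\<integral>z. Vs (mk k) z * w z \<partial>N) - (\<integral>z. V z * w z \<partial>N)\<bar>" for k
  proof -
    define m where "m = mk k"
    define n' where "n' = nk (Suc k)"
    define S where "S = Sk k"
    define T where "T z = indicator (E n') z * w z" for z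
    define R where "R z = \<rho> m z * indicator (E n') z" for z
    have Em: "E n' \<in> sets N" by (rule E)
    have Tm: "T \<in> borel_measurable N" unfolding T_def using wm Em by measurable
    have Rm: "R \<in> borel_measurable N" unfolding R_def using \<rho>m Em by measurable
    have Sm: "S \<in> borel_measurable N" unfolding S_def by (rule Pk(4))
    have Sb: "\<bar>S z\<bar> \<le> \<bar>r z\<bar>" for z unfolding S_def by (rule Pk(5))
    have Tb: "\<bar>T z\<bar> \<le> indicator (E n') z * \<bar>r z\<bar>" for z
      using wb[of z] by (auto simp: T_def indicator_def)
    have Rb: "\<bar>R z\<bar> \<le> indicator (E n') z * \<bar>r z\<bar>" for z
      using \<rho>b[of m z] by (auto simp: R_def indicator_def)
    have \<rho>b': "\<bar>\<rho> m z\<bar> \<le> indicator (E m) z * \<bar>r z\<bar>" for z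
      using \<rho>b[of m z] \<rho>E[of z m] by (auto simp: indicator_def)
    have Tb': "\<bar>T z\<bar> \<le> \<bar>r z\<bar>" and Rb': "\<bar>R z\<bar> \<le> \<bar>r z\<bar>" for z
      using Tb[of z] Rb[of z] by (cases "z \<in> E n'", auto)+
    have decomp: "w z = S z + \<rho> m z - R z + T z" for z
    proof (cases "z \<in> E n'")
      case True
      have "Sk (Suc k) z = 0" using Pk(6)[of z "Suc k"] True by (simp add: n'_def)
      then have "S z = 0" using Qk(3)[of k] True by (simp add: S_def n'_def)
      then show ?thesis using True by (simp add: R_def T_def)
    next
      case False
      then show ?thesis using wk[of z k] Qk(3)[of k]
        by (simp add: R_def T_def S_def m_def n'_def)
    qed
    have iS: "integrable N (\<lambda>z. A z * S z)" and i\<rho>: "integrable N (\<lambda>z. A z * \<rho> m z)"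
      and iR: "integrable N (\<lambda>z. A z * R z)" and iT: "integrable N (\<lambda>z. A z * T z)"
      if "integrable N (\<lambda>z. A z * r z)" "A \<in> borel_measurable N" for A
      using intb[OF that Sm Sb] intb[OF that \<rho>m \<rho>b] intb[OF that Rm Rb'] intb[OF that Tm Tb'] by auto
    have split: "(\<integral>z. A z * w z \<partial>N) = (\<integral>z. A z * S z \<partial>N) + (\<integral>z. A z * \<rho> m z \<partial>N)
        - (\<integral>z. A z * R z \<partial>N) + (\<integral>z. A z * T z \<partial>N)"
      if "integrable N (\<lambda>z. A z * r z)" "A \<in> borel_measurable N" for A
    proof -
      have "(\<integral>z. A z * w z \<partial>N) = (\<integral>z. A z * S z + A z * \<rho> m z - A z * R z + A z * T z \<partial>N)"
        by (rule Bochner_Integration.integral_cong) (auto simp: decomp algebra_simps)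
      show ?thesis
        using iS[OF that] i\<rho>[OF that] iR[OF that] iT[OF that] \<open>(\<integral>z. A z * w z \<partial>N) = _\<close>
        by simp
    qed
    have s1: "(\<integral>z. Vs m z * w z \<partial>N) = (\<integral>z. Vs m z * S z \<partial>N) + a m
        - (\<integral>z. Vs m z * R z \<partial>N) + (\<integral>z. Vs m z * T z \<partial>N)"
      using split[OF intm Vsm] by (simp add: a_def)
    have s2: "(\<integral>z. V z * w z \<partial>N) = (\<integral>z. V z * S z \<partial>N) + (\<integral>z. V z * \<rho> m z \<partial>N)
        - (\<integral>z. V z * R z \<partial>N) + (\<integral>z. V z * T z \<partial>N)"
      using split[OF int0 Vm] .
    have b1: "\<bar>(\<integral>z. Vs m z * S z \<partial>N) - (\<integral>z. V z * S z \<partial>N)\<bar> < e"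
      using Pk(2)[of k] by (simp add: m_def S_def)
    have b2: "\<bar>\<integral>z. Vs m z * R z \<partial>N\<bar> < e"
      using intbnd[OF intm[of m] Vsm[of m] Rm Rb Em] Qk(4)[of k] by (simp add: TVs_def m_def n'_def)
    have b3: "\<bar>\<integral>z. Vs m z * T z \<partial>N\<bar> < e"
      using intbnd[OF intm[of m] Vsm[of m] Tm Tb Em] Qk(4)[of k] by (simp add: TVs_def m_def n'_def)
    have b4: "\<bar>\<integral>z. V z * \<rho> m z \<partial>N\<bar> < e"
      using intbnd[OF int0 Vm \<rho>m \<rho>b' E] Pk(3)[of k] by (simp add: TV_def m_def)
    have b5: "\<bar>\<integral>z. V z * R z \<partial>N\<bar> < e"
      using intbnd[OF int0 Vm Rm Rb Em] Qk(5)[of k] by (simp add: TV_def n'_def)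
    have b6: "\<bar>\<integral>z. V z * T z \<partial>N\<bar> < e"
      using intbnd[OF int0 Vm Tm Tb Em] Qk(5)[of k] by (simp add: TV_def n'_def)
    have b7: "8 * e \<le> \<bar>a m\<bar>" using Pk(1)[of k] by (simp add: e_def m_def)
    show ?thesis unfolding m_def[symmetric] s1 s2 using b1 b2 b3 b4 b5 b6 b7 by linarith
  qed
  have "2 * e > 0" using e by simp
  from conv[unfolded LIMSEQ_iff, rule_format, OF this] obtain no where
    no: "\<And>n. n \<ge> no \<Longrightarrow> norm ((\<integral>z. Vs (mk n) z * w z \<partial>N) - (\<integral>z. V z * w z \<partial>N)) < 2 * e"
    by blast
  have "\<bar>(\<integral>z. Vs (mk no) z * w z \<partial>N) - (\<integral>z. V z * w z \<partial>N)\<bar> < 2 * e"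
    using no[of no] by simp
  with big[of no] show False by linarith
qed

lemma conj_exp: "1 < p \<Longrightarrow> 1 < p / (p - 1)" for p :: real
  by (simp add: field_simps)

lemma Lp_dom:
  assumes "Lp q N g" "h \<in> borel_measurable N" "\<And>z. \<bar>h z\<bar> \<le> \<bar>g z\<bar>" "0 < q"
  shows "Lp q N h"
  unfolding Lp_def
proof
  show "h \<in> borel_measurable N" by fact
  show "integrable N (\<lambda>x. \<bar>h x\<bar> powr q)"
  proof (rule Bochner_Integration.integrable_bound)
    show "integrable N (\<lambda>x. \<bar>g x\<bar> powr q)" using assms(1) by (simp add: Lp_def)
    show "(\<lambda>x. \<bar>h x\<bar> powr q) \<in> borel_measurable N" using assms(2) by measurable
    show "AE x in N. norm (\<bar>h x\<bar> powr q) \<le> norm (\<bar>g x\<bar> powr q)"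
      using assms(3,4) by (intro AE_I2) (simp add: powr_mono2)
  qed
qed

lemma div_le_self_real: "1 \<le> c \<Longrightarrow> 0 \<le> x \<Longrightarrow> x / c \<le> (x::real)"
  by (simp add: divide_le_eq mult_le_cancel_left1)

lemma young_int:
  fixes f g :: "'a \<Rightarrow> real"
  assumes p: "1 < p" and f: "Lp p N f" and g: "Lp (p / (p - 1)) N g"
  shows "integrable N (\<lambda>z. f z * g z)"
proof (rule Bochner_Integration.integrable_bound)
  let ?q = "p / (p - 1)"
  show "integrable N (\<lambda>z. \<bar>f z\<bar> powr p + \<bar>g z\<bar> powr ?q)"
    using f g by (auto simp: Lp_def)
  show "(\<lambda>z. f z * g z) \<in> borel_measurable N" using f g by (auto simp: Lp_def)
  have q: "1 < ?q" "1 / p + 1 / ?q = 1" using p by (auto simp: field_simps)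
  show "AE z in N. norm (f z * g z) \<le> norm (\<bar>f z\<bar> powr p + \<bar>g z\<bar> powr ?q)"
  proof (rule AE_I2)
    fix z
    have y: "\<bar>f z\<bar> * \<bar>g z\<bar> \<le> \<bar>f z\<bar> powr p / p + \<bar>g z\<bar> powr ?q / ?q"
      by (rule Youngs_inequality) (use p q in auto)
    have "\<bar>f z\<bar> powr p / p \<le> \<bar>f z\<bar> powr p" using p by (intro div_le_self_real) auto
    moreover have "\<bar>g z\<bar> powr ?q / ?q \<le> \<bar>g z\<bar> powr ?q" using q by (intro div_le_self_real) auto
    ultimately show "norm (f z * g z) \<le> norm (\<bar>f z\<bar> powr p + \<bar>g z\<bar> powr ?q)"
      using y by (simp add: abs_mult)
  qed
qed

lemma wc_trunc:
  fixes Vs :: "nat \<Rightarrow> 'a \<Rightarrow> real" and V r :: "'a \<Rightarrow> real" and W :: "nat \<Rightarrow> 'a \<Rightarrow> real"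
  assumes p: "1 < p" and wc: "weak_conv_Lp p N Vs V"
    and r: "Lp (p / (p - 1)) N r"
    and Wm: "\<And>m. W m \<in> borel_measurable N"
    and Wb: "\<And>m z. \<bar>W m z - r z\<bar> \<le> \<bar>r z\<bar>"
    and WE: "\<And>m z. z \<notin> E m \<Longrightarrow> W m z = r z"
    and E: "\<And>n. E n \<in> sets N" and dec: "\<And>m n. m \<le> n \<Longrightarrow> E n \<subseteq> E m"
    and emp: "\<And>z. \<exists>n. z \<notin> E n"
  shows "(\<lambda>m. \<integral>z. Vs m z * W m z \<partial>N) \<longlonglongrightarrow> (\<integral>z. V z * r z \<partial>N)"
proof -
  let ?q = "p / (p - 1)"
  have q: "0 < ?q" using p by simp
  have Vs: "\<And>m. Lp p N (Vs m)" and V: "Lp p N V"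
    and lim: "\<And>g. Lp ?q N g \<Longrightarrow> (\<lambda>m. \<integral>x. Vs m x * g x \<partial>N) \<longlonglongrightarrow> (\<integral>x. V x * g x \<partial>N)"
    using wc by (auto simp: weak_conv_Lp_def)
  have rm: "r \<in> borel_measurable N" using r by (simp add: Lp_def)
  define \<rho> where "\<rho> m z = W m z - r z" for m z
  have \<rho>m: "\<rho> m \<in> borel_measurable N" for m unfolding \<rho>_def using Wm rm by measurable
  have intm: "integrable N (\<lambda>z. Vs m z * r z)" for m by (rule young_int[OF p Vs r])
  have int0: "integrable N (\<lambda>z. V z * r z)" by (rule young_int[OF p V r])
  have g: "(\<lambda>m. \<integral>z. Vs m z * \<rho> m z \<partial>N) \<longlonglongrightarrow> 0"
  proof (rule glide[where r=r and E=E])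
    show "(\<lambda>m. \<integral>z. Vs m z * w z \<partial>N) \<longlonglongrightarrow> (\<integral>z. V z * w z \<partial>N)"
      if "w \<in> borel_measurable N" "\<And>z. \<bar>w z\<bar> \<le> \<bar>r z\<bar>" for w
      by (rule lim[OF Lp_dom[OF r that q]])
    show "\<And>m. integrable N (\<lambda>z. Vs m z * r z)" by (rule intm)
    show "integrable N (\<lambda>z. V z * r z)" by (rule int0)
    show "\<And>m. Vs m \<in> borel_measurable N" using Vs by (simp add: Lp_def)
    show "V \<in> borel_measurable N" using V by (simp add: Lp_def)
    show "\<And>m. \<rho> m \<in> borel_measurable N" by (rule \<rho>m)
    show "\<And>m z. \<bar>\<rho> m z\<bar> \<le> \<bar>r z\<bar>" using Wb by (simp add: \<rho>_def)
    show "\<And>m z. z \<notin> E m \<Longrightarrow> \<rho> m z = 0" using WE by (simp add: \<rho>_def)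
  qed (use E dec emp in auto)
  have eq: "(\<integral>z. Vs m z * W m z \<partial>N) = (\<integral>z. Vs m z * r z \<partial>N) + (\<integral>z. Vs m z * \<rho> m z \<partial>N)" for m
  proof -
    have i2: "integrable N (\<lambda>z. Vs m z * \<rho> m z)"
      by (rule intb[OF intm]) (use Vs \<rho>m Wb in \<open>auto simp: Lp_def, auto simp: \<rho>_def\<close>)
    have "(\<integral>z. Vs m z * W m z \<partial>N) = (\<integral>z. Vs m z * r z + Vs m z * \<rho> m z \<partial>N)"
      by (simp add: \<rho>_def algebra_simps)
    also have "\<dots> = (\<integral>z. Vs m z * r z \<partial>N) + (\<integral>z. Vs m z * \<rho> m z \<partial>N)"
      using intm i2 by simp
    finally show ?thesis .
  qed
  show ?thesis unfolding eq using tendsto_add[OF lim[OF r] g] by simp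
qed

definition Kt :: "real \<Rightarrow> real \<Rightarrow> real" where
  "Kt s t = (if 0 < s \<and> s < t then 1 else if t < s \<and> s < 0 then -1 else 0)"

lemma Kt_measurable[measurable]: "(\<lambda>(t, s). Kt s t) \<in> borel_measurable (lborel \<Otimes>\<^sub>M lborel)"
  unfolding Kt_def by measurable

lemma Kt_bound: "\<bar>Kt s t\<bar> \<le> 1" by (simp add: Kt_def)

lemma Kt_supp: "Kt s t \<noteq> 0 \<Longrightarrow> t \<in> {-\<tau>..\<tau>} \<Longrightarrow> s \<in> {-\<tau>..\<tau>}"
  by (auto simp: Kt_def split: if_splits)

lemma lbint_K:
  fixes f :: "real \<Rightarrow> real"
  assumes t: "t \<in> {-\<tau>..\<tau>}"
  shows "(LBINT s=0..t. f s) = (\<integral>s. Kt s t * (indicator {-\<tau>..\<tau>} s * f s) \<partial>lborel)"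
proof (cases "0 \<le> t")
  case True
  have "(LBINT s=0..t. f s) = (\<integral>s. indicator {0<..<t} s * f s \<partial>lborel)"
    using True by (simp add: interval_lebesgue_integral_def set_lebesgue_integral_def zero_ereal_def einterval_eq_Icc)
  also have "\<dots> = (\<integral>s. Kt s t * (indicator {-\<tau>..\<tau>} s * f s) \<partial>lborel)"
    by (rule Bochner_Integration.integral_cong) (use True t in \<open>auto simp: Kt_def indicator_def\<close>)
  finally show ?thesis .
next
  case False
  have "(LBINT s=0..t. f s) = - (\<integral>s. indicator {t<..<0} s * f s \<partial>lborel)"
    using False by (simp add: interval_lebesgue_integral_def set_lebesgue_integral_def zero_ereal_def einterval_eq_Icc)
  also have "\<dots> = (\<integral>s. - (indicator {t<..<0} s * f s) \<partial>lborel)" by simp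
  also have "\<dots> = (\<integral>s. Kt s t * (indicator {-\<tau>..\<tau>} s * f s) \<partial>lborel)"
    by (rule Bochner_Integration.integral_cong) (use False t in \<open>auto simp: Kt_def indicator_def\<close>)
  finally show ?thesis .
qed

lemma Kt_measurable2[measurable]: "(\<lambda>(s, t). Kt s t) \<in> borel_measurable (lborel \<Otimes>\<^sub>M lborel)"
  unfolding Kt_def by measurable

lemma abs_le_powr: "1 \<le> q \<Longrightarrow> \<bar>x\<bar> \<le> 1 + \<bar>x::real\<bar> powr q"
proof (cases "\<bar>x\<bar> \<le> 1")
  case False
  assume q: "1 \<le> q"
  have "\<bar>x\<bar> powr 1 \<le> \<bar>x\<bar> powr q" using False q by (intro powr_mono) auto
  then show ?thesis using False by simp
qed (use powr_ge_zero[of "\<bar>x\<bar>" q] in linarith)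

definition Hg :: "real \<Rightarrow> (real \<Rightarrow> real) \<Rightarrow> real \<Rightarrow> real" where
  "Hg \<tau> g s = (\<integral>t. (indicator {-\<tau>..\<tau>} t * g t) * Kt s t \<partial>lborel)"

lemma finM: "0 \<le> \<tau> \<Longrightarrow> finite_measure (restrict_space lborel {-\<tau>..\<tau>::real})"
  by (rule finite_measureI) (simp add: emeasure_restrict_space)

lemma Lp'_int:
  fixes g :: "real \<Rightarrow> real"
  assumes p: "1 < p" and g: "Lp (p / (p - 1)) (restrict_space lborel {-\<tau>..\<tau>}) g"
  shows "integrable lborel (\<lambda>t. indicator {-\<tau>..\<tau>} t * g t)"
proof -
  let ?q = "p / (p - 1)"
  have q: "1 \<le> ?q" using p by (simp add: field_simps)
  have gm: "(\<lambda>t. indicator {-\<tau>..\<tau>} t * g t) \<in> borel_measurable lborel"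
    using g by (auto simp: Lp_def borel_measurable_restrict_space_iff)
  have gi: "integrable lborel (\<lambda>t. indicator {-\<tau>..\<tau>} t * \<bar>g t\<bar> powr ?q)"
    using g by (auto simp: Lp_def integrable_restrict_space)
  have ii: "integrable lborel (\<lambda>t. indicator {-\<tau>..\<tau>} t :: real)"
    by (auto intro!: integrable_real_indicator simp: emeasure_lborel_Icc_eq)
  show ?thesis
  proof (rule Bochner_Integration.integrable_bound[OF Bochner_Integration.integrable_add[OF ii gi] gm])
    show "AE t in lborel. norm (indicator {-\<tau>..\<tau>} t * g t) \<le> norm (indicator {-\<tau>..\<tau>} t + indicator {-\<tau>..\<tau>} t * \<bar>g t\<bar> powr ?q)"
      using abs_le_powr[OF q] by (intro AE_I2) (auto simp: indicator_def)
  qed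
qed

lemma Hg_measurable:
  assumes "integrable lborel (\<lambda>t. indicator {-\<tau>..\<tau>} t * g t)"
  shows "Hg \<tau> g \<in> borel_measurable lborel"
proof -
  have m: "(\<lambda>t. indicator {-\<tau>..\<tau>} t * g t) \<in> borel_measurable lborel" using assms by auto
  show ?thesis unfolding Hg_def
    by (rule lborel.borel_measurable_lebesgue_integral) (use m in measurable)
qed

lemma Hg_bound:
  assumes "integrable lborel (\<lambda>t. indicator {-\<tau>..\<tau>} t * g t)"
  shows "\<bar>Hg \<tau> g s\<bar> \<le> (\<integral>t. \<bar>indicator {-\<tau>..\<tau>} t * g t\<bar> \<partial>lborel)"
proof -
  have m: "(\<lambda>t. indicator {-\<tau>..\<tau>} t * g t) \<in> borel_measurable lborel" using assms by auto
  have i: "integrable lborel (\<lambda>t. (indicator {-\<tau>..\<tau>} t * g t) * Kt s t)"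
  proof (rule Bochner_Integration.integrable_bound[OF integrable_abs[OF assms]])
    show "(\<lambda>t. indicator {-\<tau>..\<tau>} t * g t * Kt s t) \<in> borel_measurable lborel"
      using m unfolding Kt_def by measurable
    show "AE t in lborel. norm (indicator {-\<tau>..\<tau>} t * g t * Kt s t) \<le> norm \<bar>indicator {-\<tau>..\<tau>} t * g t\<bar>"
      using Kt_bound[of s] by (intro AE_I2) (auto simp: abs_mult intro: mult_left_le)
  qed
  have "\<bar>Hg \<tau> g s\<bar> \<le> (\<integral>t. \<bar>(indicator {-\<tau>..\<tau>} t * g t) * Kt s t\<bar> \<partial>lborel)"
    unfolding Hg_def by (rule integral_abs_bound)
  also have "\<dots> \<le> (\<integral>t. \<bar>indicator {-\<tau>..\<tau>} t * g t\<bar> \<partial>lborel)"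
    by (rule integral_mono[OF integrable_abs[OF i] integrable_abs[OF assms]])
       (use Kt_bound[of s] in \<open>auto simp: abs_mult intro: mult_left_le\<close>)
  finally show ?thesis .
qed

lemma Hg_supp: "s \<notin> {-\<tau>..\<tau>} \<Longrightarrow> Hg \<tau> g s = 0"
proof -
  assume s: "s \<notin> {-\<tau>..\<tau>}"
  have "(indicator {-\<tau>..\<tau>} t * g t) * Kt s t = 0" for t
    using Kt_supp[of s t \<tau>] s by (cases "t \<in> {-\<tau>..\<tau>}") auto
  then have "(\<lambda>t. (indicator {-\<tau>..\<tau>} t * g t) * Kt s t) = (\<lambda>t. 0)" by (rule ext)
  then show ?thesis unfolding Hg_def by simp
qed

lemma timeF:
  fixes G :: "real \<times> 'b::euclidean_space \<Rightarrow> real" and \<tau> :: real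
  assumes p: "1 < p" and tau: "0 < \<tau>"
    and G: "integrable (lborel \<Otimes>\<^sub>M lborel) (\<lambda>(s, x). indicator {-\<tau>..\<tau>} s * G (s, x))"
  shows "Lp p (restrict_space lborel {-\<tau>..\<tau>}) (\<lambda>t. LBINT s=0..t. \<integral>x. G (s, x) \<partial>lborel)"
    and "Lp (p / (p - 1)) (restrict_space lborel {-\<tau>..\<tau>}) g \<Longrightarrow>
      (\<integral>t. (LBINT s=0..t. \<integral>x. G (s, x) \<partial>lborel) * g t \<partial>restrict_space lborel {-\<tau>..\<tau>}) =
      (\<integral>z. (case z of (s, x) \<Rightarrow> Hg \<tau> g s * (indicator {-\<tau>..\<tau>} s * G (s, x))) \<partial>(lborel \<Otimes>\<^sub>M lborel))"
proof -
  define M where "M = restrict_space lborel {-\<tau>..\<tau>::real}"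
  define f\<tau> where "f\<tau> s = (\<integral>x. indicator {-\<tau>..\<tau>} s * G (s, x) \<partial>lborel)" for s
  have f\<tau>_eq: "f\<tau> s = indicator {-\<tau>..\<tau>} s * (\<integral>x. G (s, x) \<partial>lborel)" for s
    unfolding f\<tau>_def by simp
  have f\<tau>i: "integrable lborel f\<tau>"
    unfolding f\<tau>_def using lborel_pair.integrable_fst[OF G] by simp
  have f\<tau>m: "f\<tau> \<in> borel_measurable lborel" using f\<tau>i by auto
  define \<Phi> where "\<Phi> t = (\<integral>s. Kt s t * f\<tau> s \<partial>lborel)" for t
  have \<Phi>m: "\<Phi> \<in> borel_measurable lborel"
    unfolding \<Phi>_def by (rule lborel.borel_measurable_lebesgue_integral) (use f\<tau>m in measurable)
  have F\<Phi>: "(LBINT s=0..t. \<integral>x. G (s, x) \<partial>lborel) = \<Phi> t" if "t \<in> {-\<tau>..\<tau>}" for t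
    unfolding \<Phi>_def lbint_K[OF that] f\<tau>_eq ..
  define C where "C = (\<integral>s. \<bar>f\<tau> s\<bar> \<partial>lborel)"
  have \<Phi>b: "\<bar>\<Phi> t\<bar> \<le> C" for t
  proof -
    have i: "integrable lborel (\<lambda>s. Kt s t * f\<tau> s)"
    proof (rule Bochner_Integration.integrable_bound[OF integrable_abs[OF f\<tau>i]])
      show "(\<lambda>s. Kt s t * f\<tau> s) \<in> borel_measurable lborel" using f\<tau>m unfolding Kt_def by measurable
      show "AE s in lborel. norm (Kt s t * f\<tau> s) \<le> norm \<bar>f\<tau> s\<bar>"
        using Kt_bound by (intro AE_I2) (auto simp: abs_mult intro: mult_left_le_one_le)
    qed
    have "\<bar>\<Phi> t\<bar> \<le> (\<integral>s. \<bar>Kt s t * f\<tau> s\<bar> \<partial>lborel)" unfolding \<Phi>_def by (rule integral_abs_bound)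
    also have "\<dots> \<le> C" unfolding C_def
      by (rule integral_mono[OF integrable_abs[OF i] integrable_abs[OF f\<tau>i]])
         (use Kt_bound in \<open>auto simp: abs_mult intro: mult_left_le_one_le\<close>)
    finally show ?thesis .
  qed
  have spM: "space M = {-\<tau>..\<tau>}" by (simp add: M_def)
  have Fm: "(\<lambda>t. LBINT s=0..t. \<integral>x. G (s, x) \<partial>lborel) \<in> borel_measurable M"
  proof -
    have "\<Phi> \<in> borel_measurable M" unfolding M_def by (rule measurable_restrict_space1[OF \<Phi>m])
    then show ?thesis by (rule measurable_cong[THEN iffD1, rotated]) (use F\<Phi> spM in auto)
  qed
  interpret fM: finite_measure M unfolding M_def using tau by (intro finM) simp
  show "Lp p (restrict_space lborel {-\<tau>..\<tau>}) (\<lambda>t. LBINT s=0..t. \<integral>x. G (s, x) \<partial>lborel)"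
    unfolding M_def[symmetric] Lp_def
  proof
    show "(\<lambda>t. LBINT s=0..t. \<integral>x. G (s, x) \<partial>lborel) \<in> borel_measurable M" by (rule Fm)
    show "integrable M (\<lambda>t. \<bar>LBINT s=0..t. \<integral>x. G (s, x) \<partial>lborel\<bar> powr p)"
    proof (rule fM.integrable_const_bound[where B="C powr p"])
      show "AE t in M. norm (\<bar>LBINT s=0..t. \<integral>x. G (s, x) \<partial>lborel\<bar> powr p) \<le> C powr p"
        using F\<Phi> \<Phi>b spM p by (intro AE_I2) (auto intro!: powr_mono2)
      show "(\<lambda>t. \<bar>LBINT s=0..t. \<integral>x. G (s, x) \<partial>lborel\<bar> powr p) \<in> borel_measurable M"
        using Fm by measurable
    qed
  qed
  assume g: "Lp (p / (p - 1)) (restrict_space lborel {-\<tau>..\<tau>}) g"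
  define g\<tau> where "g\<tau> t = indicator {-\<tau>..\<tau>} t * g t" for t
  have g\<tau>i: "integrable lborel g\<tau>" unfolding g\<tau>_def by (rule Lp'_int[OF p g])
  have g\<tau>m: "g\<tau> \<in> borel_measurable lborel" using g\<tau>i by auto
  have H_def': "Hg \<tau> g s = (\<integral>t. g\<tau> t * Kt s t \<partial>lborel)" for s by (simp add: Hg_def g\<tau>_def)
  have "(\<integral>t. (LBINT s=0..t. \<integral>x. G (s, x) \<partial>lborel) * g t \<partial>M)
      = (\<integral>t. indicator {-\<tau>..\<tau>} t * ((LBINT s=0..t. \<integral>x. G (s, x) \<partial>lborel) * g t) \<partial>lborel)"
    unfolding M_def by (subst integral_restrict_space) auto
  also have "\<dots> = (\<integral>t. g\<tau> t * \<Phi> t \<partial>lborel)"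
    by (rule Bochner_Integration.integral_cong) (auto simp: g\<tau>_def F\<Phi> indicator_def)
  also have "\<dots> = (\<integral>t. \<integral>s. g\<tau> t * Kt s t * f\<tau> s \<partial>lborel \<partial>lborel)"
    unfolding \<Phi>_def by (simp add: mult.assoc)
  also have "\<dots> = (\<integral>s. \<integral>t. g\<tau> t * Kt s t * f\<tau> s \<partial>lborel \<partial>lborel)"
  proof (rule lborel_pair.Fubini_integral[symmetric])
    have dom: "integrable (lborel \<Otimes>\<^sub>M lborel) (\<lambda>(t, s). \<bar>g\<tau> t\<bar> * \<bar>f\<tau> s\<bar>)"
    proof (rule lborel_pair.Fubini_integrable)
      show "(\<lambda>(t, s). \<bar>g\<tau> t\<bar> * \<bar>f\<tau> s\<bar>) \<in> borel_measurable (lborel \<Otimes>\<^sub>M lborel)"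
        using g\<tau>m f\<tau>m by measurable
      show "integrable lborel (\<lambda>t. \<integral>s. norm (case (t, s) of (t, s) \<Rightarrow> \<bar>g\<tau> t\<bar> * \<bar>f\<tau> s\<bar>) \<partial>lborel)"
        using integrable_mult_left[OF integrable_abs[OF g\<tau>i], of C] by (simp add: C_def abs_mult)
      show "AE t in lborel. integrable lborel (\<lambda>s. case (t, s) of (t, s) \<Rightarrow> \<bar>g\<tau> t\<bar> * \<bar>f\<tau> s\<bar>)"
        using f\<tau>i by auto
    qed
    show "integrable (lborel \<Otimes>\<^sub>M lborel) (\<lambda>(t, s). g\<tau> t * Kt s t * f\<tau> s)"
    proof (rule Bochner_Integration.integrable_bound[OF dom])
      show "(\<lambda>(t, s). g\<tau> t * Kt s t * f\<tau> s) \<in> borel_measurable (lborel \<Otimes>\<^sub>M lborel)"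
        using g\<tau>m f\<tau>m by measurable
      show "AE z in lborel \<Otimes>\<^sub>M lborel. norm (case z of (t, s) \<Rightarrow> g\<tau> t * Kt s t * f\<tau> s)
          \<le> norm (case z of (t, s) \<Rightarrow> \<bar>g\<tau> t\<bar> * \<bar>f\<tau> s\<bar>)"
      proof (rule AE_I2, clarify)
        fix t s
        have "\<bar>g\<tau> t * Kt s t * f\<tau> s\<bar> = \<bar>g\<tau> t\<bar> * \<bar>Kt s t\<bar> * \<bar>f\<tau> s\<bar>" by (simp add: abs_mult)
        also have "\<dots> \<le> \<bar>g\<tau> t\<bar> * 1 * \<bar>f\<tau> s\<bar>"
          by (intro mult_right_mono mult_left_mono Kt_bound) auto
        finally show "norm (g\<tau> t * Kt s t * f\<tau> s) \<le> norm (\<bar>g\<tau> t\<bar> * \<bar>f\<tau> s\<bar>)" by simp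
      qed
    qed
  qed
  also have "\<dots> = (\<integral>s. Hg \<tau> g s * f\<tau> s \<partial>lborel)"
    unfolding H_def' by simp
  also have "\<dots> = (\<integral>s. \<integral>x. Hg \<tau> g s * (indicator {-\<tau>..\<tau>} s * G (s, x)) \<partial>lborel \<partial>lborel)"
    unfolding f\<tau>_def by simp
  also have "\<dots> = (\<integral>z. (case z of (s, x) \<Rightarrow> Hg \<tau> g s * (indicator {-\<tau>..\<tau>} s * G (s, x))) \<partial>(lborel \<Otimes>\<^sub>M lborel))"
  proof (rule lborel_pair.integral_fst)
    have Hm: "Hg \<tau> g \<in> borel_measurable lborel" by (rule Hg_measurable) (use g\<tau>i in \<open>simp add: g\<tau>_def[abs_def]\<close>)
    have Hb: "\<bar>Hg \<tau> g s\<bar> \<le> (\<integral>t. \<bar>g\<tau> t\<bar> \<partial>lborel)" for s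
      using Hg_bound[of \<tau> g s] g\<tau>i by (simp add: g\<tau>_def[abs_def])
    show "integrable (lborel \<Otimes>\<^sub>M lborel) (\<lambda>(s, x). Hg \<tau> g s * (indicator {-\<tau>..\<tau>} s * G (s, x)))"
    proof (rule Bochner_Integration.integrable_bound[OF integrable_mult_right[OF integrable_abs[OF G], of "\<integral>t. \<bar>g\<tau> t\<bar> \<partial>lborel"]])
      have Gm: "(\<lambda>(s, x). indicator {-\<tau>..\<tau>} s * G (s, x)) \<in> borel_measurable (lborel \<Otimes>\<^sub>M lborel)"
        using G by auto
      show "(\<lambda>(s, x). Hg \<tau> g s * (indicator {-\<tau>..\<tau>} s * G (s, x))) \<in> borel_measurable (lborel \<Otimes>\<^sub>M lborel)"
        using Hm Gm by measurable
      show "AE z in lborel \<Otimes>\<^sub>M lborel. norm (case z of (s, x) \<Rightarrow> Hg \<tau> g s * (indicator {-\<tau>..\<tau>} s * G (s, x)))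
          \<le> norm ((\<integral>t. \<bar>g\<tau> t\<bar> \<partial>lborel) * \<bar>case z of (s, x) \<Rightarrow> indicator {-\<tau>..\<tau>} s * G (s, x)\<bar>)"
        using Hb by (intro AE_I2) (auto simp: abs_mult intro!: mult_right_mono)
    qed
  qed
  finally show "(\<integral>t. (LBINT s=0..t. \<integral>x. G (s, x) \<partial>lborel) * g t \<partial>restrict_space lborel {-\<tau>..\<tau>}) =
      (\<integral>z. (case z of (s, x) \<Rightarrow> Hg \<tau> g s * (indicator {-\<tau>..\<tau>} s * G (s, x))) \<partial>(lborel \<Otimes>\<^sub>M lborel))"
    unfolding M_def .
qed

lemma chi_abs: "\<bar>chi m y\<bar> \<le> \<bar>y\<bar>" by (auto simp: chi_def)
lemma chi_diff: "\<bar>chi m y - y\<bar> \<le> \<bar>y\<bar>" by (auto simp: chi_def)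
lemma chi_small: "\<bar>y\<bar> \<le> real m \<Longrightarrow> chi m y = y" by (auto simp: chi_def)

lemma integrable_eqI: "integrable M f \<Longrightarrow> (\<And>x. f x = g x) \<Longrightarrow> integrable M g"
proof -
  assume "integrable M f" "\<And>x. f x = g x"
  moreover then have "f = g" by (intro ext)
  ultimately show ?thesis by simp
qed

lemma Lp_scale:
  assumes "Lp q N f"
  shows "Lp q N (\<lambda>z. c * f z)"
  using assms unfolding Lp_def
  by (auto simp: abs_mult powr_mult)

lemma main_general:
  fixes I :: "'i set" and \<beta> :: "'i \<Rightarrow> real \<Rightarrow> 'b::euclidean_space \<Rightarrow> real" and \<psi> :: "'i \<Rightarrow> 'b \<Rightarrow> real"
    and Vs :: "nat \<Rightarrow> 'i \<Rightarrow> real \<Rightarrow> 'b \<Rightarrow> real" and V :: "'i \<Rightarrow> real \<Rightarrow> 'b \<Rightarrow> real"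
  assumes p: "1 < p" and tau: "0 < \<tau>" and I: "finite I"
    and \<beta>m: "\<And>i. i \<in> I \<Longrightarrow> (\<lambda>(s, x). \<beta> i s x) \<in> borel_measurable (lborel \<Otimes>\<^sub>M lborel)"
    and \<psi>m: "\<And>i. i \<in> I \<Longrightarrow> \<psi> i \<in> borel_measurable lborel"
    and W: "\<And>i. i \<in> I \<Longrightarrow> Lp (p / (p - 1)) (lborel \<Otimes>\<^sub>M lborel)
              (\<lambda>(s, x). indicator {-\<tau>..\<tau>} s * \<beta> i s x * \<psi> i x)"
    and wc: "\<And>i. i \<in> I \<Longrightarrow> weak_conv_Lp p (lborel \<Otimes>\<^sub>M lborel) (\<lambda>m (s, x). Vs m i s x) (\<lambda>(s, x). V i s x)"
  shows "weak_conv_Lp p (restrict_space lborel {-\<tau>..\<tau>})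
     (\<lambda>m t. LBINT s=0..t. \<integral>x. (\<Sum>i\<in>I. chi m (\<beta> i s x) * Vs m i s x * \<psi> i x) \<partial>lborel)
     (\<lambda>t. LBINT s=0..t. \<integral>x. (\<Sum>i\<in>I. \<beta> i s x * V i s x * \<psi> i x) \<partial>lborel)"
proof -
  let ?N = "lborel \<Otimes>\<^sub>M lborel :: (real \<times> 'b) measure"
  let ?q = "p / (p - 1)"
  have q0: "0 < ?q" using p by simp
  define r where "r i = (\<lambda>(s, x). indicator {-\<tau>..\<tau>} s * \<beta> i s x * \<psi> i x)" for i
  have rLp: "Lp ?q ?N (r i)" if "i \<in> I" for i unfolding r_def by (rule W[OF that])
  have VsLp: "Lp p ?N (\<lambda>(s, x). Vs m i s x)" if "i \<in> I" for i m
    using wc[OF that] by (simp add: weak_conv_Lp_def)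
  have VLp: "Lp p ?N (\<lambda>(s, x). V i s x)" if "i \<in> I" for i
    using wc[OF that] by (simp add: weak_conv_Lp_def)
  define T where "T m i = (\<lambda>(s, x). indicator {-\<tau>..\<tau>} s * chi m (\<beta> i s x) * \<psi> i x)" for m i
  have Tm: "T m i \<in> borel_measurable ?N" if "i \<in> I" for m i
    unfolding T_def chi_def using \<beta>m[OF that] \<psi>m[OF that] by measurable
  have TLp: "Lp ?q ?N (T m i)" if "i \<in> I" for m i
  proof (rule Lp_dom[OF rLp[OF that] Tm[OF that] _ q0])
    fix z show "\<bar>T m i z\<bar> \<le> \<bar>r i z\<bar>"
      using chi_abs[of m "\<beta> i (fst z) (snd z)"]
      by (cases z) (auto simp: T_def r_def abs_mult indicator_def intro: mult_right_mono)
  qed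
  have Gmi: "integrable ?N (\<lambda>(s, x). indicator {-\<tau>..\<tau>} s *
      (\<Sum>i\<in>I. chi m (\<beta> i s x) * Vs m i s x * \<psi> i x))" for m
  proof -
    have "integrable ?N (\<lambda>z. \<Sum>i\<in>I. (case z of (s, x) \<Rightarrow> Vs m i s x) * T m i z)"
      by (rule Bochner_Integration.integrable_sum) (rule young_int[OF p VsLp TLp]; assumption)
    then show ?thesis
      by (rule integrable_eqI) (auto simp: T_def sum_distrib_left algebra_simps split: prod.splits)
  qed
  have G0i: "integrable ?N (\<lambda>(s, x). indicator {-\<tau>..\<tau>} s *
      (\<Sum>i\<in>I. \<beta> i s x * V i s x * \<psi> i x))"
  proof -
    have "integrable ?N (\<lambda>z. \<Sum>i\<in>I. (case z of (s, x) \<Rightarrow> V i s x) * r i z)"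
      by (rule Bochner_Integration.integrable_sum) (rule young_int[OF p VLp rLp]; assumption)
    then show ?thesis
      by (rule integrable_eqI) (auto simp: r_def sum_distrib_left algebra_simps split: prod.splits)
  qed
  show ?thesis unfolding weak_conv_Lp_def
  proof (intro conjI allI impI)
    show "Lp p (restrict_space lborel {-\<tau>..\<tau>})
        (\<lambda>t. LBINT s=0..t. \<integral>x. (\<Sum>i\<in>I. chi m (\<beta> i s x) * Vs m i s x * \<psi> i x) \<partial>lborel)" for m
      using timeF(1)[OF p tau, where G="\<lambda>z. \<Sum>i\<in>I. chi m (\<beta> i (fst z) (snd z)) * Vs m i (fst z) (snd z) * \<psi> i (snd z)"] Gmi[of m] by simp
    show "Lp p (restrict_space lborel {-\<tau>..\<tau>})
        (\<lambda>t. LBINT s=0..t. \<integral>x. (\<Sum>i\<in>I. \<beta> i s x * V i s x * \<psi> i x) \<partial>lborel)"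
      using timeF(1)[OF p tau, where G="\<lambda>z. \<Sum>i\<in>I. \<beta> i (fst z) (snd z) * V i (fst z) (snd z) * \<psi> i (snd z)"] G0i by simp
    fix g assume g: "Lp ?q (restrict_space lborel {-\<tau>..\<tau>}) g"
    define H where "H = Hg \<tau> g"
    have gi: "integrable lborel (\<lambda>t. indicator {-\<tau>..\<tau>} t * g t)" by (rule Lp'_int[OF p g])
    have Hm: "H \<in> borel_measurable lborel" unfolding H_def by (rule Hg_measurable[OF gi])
    define C where "C = (\<integral>t. \<bar>indicator {-\<tau>..\<tau>} t * g t\<bar> \<partial>lborel)"
    have Hb: "\<bar>H s\<bar> \<le> C" for s unfolding H_def C_def by (rule Hg_bound[OF gi])
    define R where "R i = (\<lambda>(s, x). H s * (indicator {-\<tau>..\<tau>} s * \<beta> i s x * \<psi> i x))" for i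
    define Wm where "Wm m i = (\<lambda>(s, x). H s * (indicator {-\<tau>..\<tau>} s * chi m (\<beta> i s x) * \<psi> i x))" for m i
    have Rm: "R i \<in> borel_measurable ?N" if "i \<in> I" for i
      unfolding R_def using \<beta>m[OF that] \<psi>m[OF that] Hm by measurable
    have Wmm: "Wm m i \<in> borel_measurable ?N" if "i \<in> I" for m i
      unfolding Wm_def chi_def using \<beta>m[OF that] \<psi>m[OF that] Hm by measurable
    have RLp: "Lp ?q ?N (R i)" if "i \<in> I" for i
    proof (rule Lp_dom[OF Lp_scale[OF rLp[OF that], of C] Rm[OF that] _ q0])
      fix z show "\<bar>R i z\<bar> \<le> \<bar>C * r i z\<bar>"
        using Hb[of "fst z"] by (cases z) (auto simp: R_def r_def abs_mult intro: mult_right_mono)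
    qed
    have WLp: "Lp ?q ?N (Wm m i)" if "i \<in> I" for m i
    proof (rule Lp_dom[OF RLp[OF that] Wmm[OF that] _ q0])
      fix z show "\<bar>Wm m i z\<bar> \<le> \<bar>R i z\<bar>"
        using chi_abs[of m "\<beta> i (fst z) (snd z)"]
        by (cases z) (auto simp: Wm_def R_def abs_mult indicator_def intro!: mult_right_mono mult_left_mono)
    qed
    have lim_i: "(\<lambda>m. \<integral>z. (case z of (s, x) \<Rightarrow> Vs m i s x) * Wm m i z \<partial>?N)
        \<longlonglongrightarrow> (\<integral>z. (case z of (s, x) \<Rightarrow> V i s x) * R i z \<partial>?N)" if i: "i \<in> I" for i
    proof (rule wc_trunc[OF p wc[OF i] RLp[OF i] Wmm[OF i], where E="\<lambda>m. {z. real m < \<bar>\<beta> i (fst z) (snd z)\<bar>}"])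
      fix m z
      show "\<bar>Wm m i z - R i z\<bar> \<le> \<bar>R i z\<bar>"
      proof (cases z)
        case (Pair s x)
        have "\<bar>Wm m i z - R i z\<bar> = \<bar>H s * indicator {-\<tau>..\<tau>} s * \<psi> i x\<bar> * \<bar>chi m (\<beta> i s x) - \<beta> i s x\<bar>"
          by (simp add: Pair Wm_def R_def abs_mult[symmetric] algebra_simps)
        also have "\<dots> \<le> \<bar>H s * indicator {-\<tau>..\<tau>} s * \<psi> i x\<bar> * \<bar>\<beta> i s x\<bar>"
          by (intro mult_left_mono chi_diff) auto
        also have "\<dots> = \<bar>R i z\<bar>" by (simp add: Pair R_def abs_mult)
        finally show ?thesis .
      qed
      show "z \<notin> {z. real m < \<bar>\<beta> i (fst z) (snd z)\<bar>} \<Longrightarrow> Wm m i z = R i z"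
        by (cases z) (auto simp: Wm_def R_def chi_small)
    next
      fix n show "{z. real n < \<bar>\<beta> i (fst z) (snd z)\<bar>} \<in> sets ?N"
      proof -
        have "(\<lambda>z. \<beta> i (fst z) (snd z)) \<in> borel_measurable ?N"
          using \<beta>m[OF i] by (simp add: case_prod_beta')
        then have "{z \<in> space ?N. real n < \<bar>\<beta> i (fst z) (snd z)\<bar>} \<in> sets ?N" by measurable
        then show ?thesis by (simp add: space_pair_measure)
      qed
    next
      fix m n :: nat assume "m \<le> n"
      then show "{z. real n < \<bar>\<beta> i (fst z) (snd z)\<bar>} \<subseteq> {z. real m < \<bar>\<beta> i (fst z) (snd z)\<bar>}"
        by auto
    next
      fix z show "\<exists>n. z \<notin> {z. real n < \<bar>\<beta> i (fst z) (snd z)\<bar>}"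
        using real_arch_simple[of "\<bar>\<beta> i (fst z) (snd z)\<bar>"] by (auto simp: not_less)
    qed
    have eqm: "(\<integral>t. (LBINT s=0..t. \<integral>x. (\<Sum>i\<in>I. chi m (\<beta> i s x) * Vs m i s x * \<psi> i x) \<partial>lborel) * g t
          \<partial>restrict_space lborel {-\<tau>..\<tau>})
        = (\<Sum>i\<in>I. \<integral>z. (case z of (s, x) \<Rightarrow> Vs m i s x) * Wm m i z \<partial>?N)" for m
    proof -
      have "(\<integral>t. (LBINT s=0..t. \<integral>x. (\<Sum>i\<in>I. chi m (\<beta> i s x) * Vs m i s x * \<psi> i x) \<partial>lborel) * g t
          \<partial>restrict_space lborel {-\<tau>..\<tau>})
        = (\<integral>z. (\<Sum>i\<in>I. (case z of (s, x) \<Rightarrow> Vs m i s x) * Wm m i z) \<partial>?N)"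
        using timeF(2)[OF p tau, where G="\<lambda>z. \<Sum>i\<in>I. chi m (\<beta> i (fst z) (snd z)) * Vs m i (fst z) (snd z) * \<psi> i (snd z)", OF _ g] Gmi[of m]
        apply simp
        by (rule Bochner_Integration.integral_cong)
           (auto simp: H_def Wm_def sum_distrib_left algebra_simps)
      also have "\<dots> = (\<Sum>i\<in>I. \<integral>z. (case z of (s, x) \<Rightarrow> Vs m i s x) * Wm m i z \<partial>?N)"
        by (rule Bochner_Integration.integral_sum) (rule young_int[OF p VsLp WLp]; assumption)
      finally show ?thesis .
    qed
    have eq0: "(\<integral>t. (LBINT s=0..t. \<integral>x. (\<Sum>i\<in>I. \<beta> i s x * V i s x * \<psi> i x) \<partial>lborel) * g t
          \<partial>restrict_space lborel {-\<tau>..\<tau>})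
        = (\<Sum>i\<in>I. \<integral>z. (case z of (s, x) \<Rightarrow> V i s x) * R i z \<partial>?N)"
    proof -
      have "(\<integral>t. (LBINT s=0..t. \<integral>x. (\<Sum>i\<in>I. \<beta> i s x * V i s x * \<psi> i x) \<partial>lborel) * g t
          \<partial>restrict_space lborel {-\<tau>..\<tau>})
        = (\<integral>z. (\<Sum>i\<in>I. (case z of (s, x) \<Rightarrow> V i s x) * R i z) \<partial>?N)"
        using timeF(2)[OF p tau, where G="\<lambda>z. \<Sum>i\<in>I. \<beta> i (fst z) (snd z) * V i (fst z) (snd z) * \<psi> i (snd z)", OF _ g] G0i
        apply simp
        by (rule Bochner_Integration.integral_cong)
           (auto simp: H_def R_def sum_distrib_left algebra_simps)
      also have "\<dots> = (\<Sum>i\<in>I. \<integral>z. (case z of (s, x) \<Rightarrow> V i s x) * R i z \<partial>?N)"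
        by (rule Bochner_Integration.integral_sum) (rule young_int[OF p VLp RLp]; assumption)
      finally show ?thesis .
    qed
    show "(\<lambda>m. \<integral>t. (LBINT s=0..t. \<integral>x. (\<Sum>i\<in>I. chi m (\<beta> i s x) * Vs m i s x * \<psi> i x) \<partial>lborel) * g t
          \<partial>restrict_space lborel {-\<tau>..\<tau>})
        \<longlonglongrightarrow> (\<integral>t. (LBINT s=0..t. \<integral>x. (\<Sum>i\<in>I. \<beta> i s x * V i s x * \<psi> i x) \<partial>lborel) * g t
          \<partial>restrict_space lborel {-\<tau>..\<tau>})"
      unfolding eqm eq0 by (rule tendsto_sum) (rule lim_i)
  qed
qed

lemma powr_sum_le:
  fixes u v x r :: real
  assumes "0 \<le> x" "0 \<le> u" "0 \<le> v" "x \<le> u + v" "0 < r"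
  shows "x powr r \<le> 2 powr r * (u powr r + v powr r)"
proof -
  have "x \<le> 2 * max u v" using assms by linarith
  then have "x powr r \<le> (2 * max u v) powr r" using assms by (intro powr_mono2) auto
  also have "\<dots> = 2 powr r * max u v powr r" using assms by (simp add: powr_mult)
  also have "max u v powr r \<le> u powr r + v powr r"
    by (cases "u \<le> v") (auto simp: max_def)
  then have "2 powr r * max u v powr r \<le> 2 powr r * (u powr r + v powr r)"
    by (intro mult_left_mono) auto
  finally show ?thesis .
qed

definition C0 :: "real \<Rightarrow> real \<Rightarrow> real \<Rightarrow> real" where
  "C0 r \<mu> K1 = 2 powr r * (1 + (1 + \<mu>) * \<mu> powr (- r) * 2 powr r * (1 + K1 powr r))"

lemma final_arith:
  fixes r \<mu> K1 a c :: real
  assumes r: "1 \<le> r" and mu: "0 < \<mu>" and K1: "0 \<le> K1" and a: "0 \<le> a"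
    and c: "0 \<le> c" "c \<le> (a + K1) / \<mu>"
  shows "2 powr r * (c + c powr r * \<mu>) \<le> C0 r \<mu> K1 * (1 + a powr r)"
proof -
  define X where "X = (1 + \<mu>) * \<mu> powr (- r) * 2 powr r"
  have X0: "0 \<le> X" unfolding X_def using mu by simp
  have c1: "c \<le> 1 + c powr r" using abs_le_powr[OF r, of c] c by simp
  have "c powr r \<le> ((a + K1) / \<mu>) powr r" using c r by (intro powr_mono2) auto
  also have "\<dots> = (a + K1) powr r * \<mu> powr (- r)"
    using mu a K1 by (simp add: powr_divide powr_minus_divide)
  also have "(a + K1) powr r \<le> 2 powr r * (a powr r + K1 powr r)"
    using a K1 r by (intro powr_sum_le) auto
  finally have c2: "c powr r \<le> 2 powr r * (a powr r + K1 powr r) * \<mu> powr (- r)"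
    using mu by (simp add: mult_right_mono)
  have "c + c powr r * \<mu> \<le> 1 + (1 + \<mu>) * c powr r" using c1 by (simp add: algebra_simps)
  also have "\<dots> \<le> 1 + (1 + \<mu>) * (2 powr r * (a powr r + K1 powr r) * \<mu> powr (- r))"
    using c2 mu by (intro add_left_mono mult_left_mono) auto
  also have "\<dots> = 1 + X * (a powr r + K1 powr r)" by (simp add: X_def algebra_simps)
  also have "\<dots> \<le> (1 + X * (1 + K1 powr r)) * (1 + a powr r)"
  proof -
    have "0 \<le> X * K1 powr r * a powr r + X + a powr r" using X0 by simp
    then show ?thesis by (simp add: algebra_simps)
  qed
  finally have "c + c powr r * \<mu> \<le> (1 + X * (1 + K1 powr r)) * (1 + a powr r)" .
  then have "2 powr r * (c + c powr r * \<mu>) \<le> 2 powr r * ((1 + X * (1 + K1 powr r)) * (1 + a powr r))"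
    by (intro mult_left_mono) auto
  then show ?thesis by (simp add: C0_def X_def algebra_simps)
qed

lemma ball_bound:
  fixes b :: "'b::euclidean_space \<Rightarrow> real" and B :: "'b set"
  assumes bm[measurable]: "b \<in> borel_measurable lborel" and B[measurable]: "B \<in> sets lborel"
    and mu: "emeasure lborel B = ennreal \<mu>" "0 < \<mu>"
    and r: "1 \<le> r" "r \<le> q" and KB: "0 \<le> KB"
    and hB: "(\<integral>\<^sup>+ y. (\<integral>\<^sup>+ z. ennreal (\<bar>b y - b z\<bar> powr q) * indicator B z \<partial>lborel) * indicator B y \<partial>lborel) \<le> ennreal KB"
    and a: "(\<integral>\<^sup>+ y. ennreal \<bar>b y\<bar> * indicator B y \<partial>lborel) = ennreal a" "0 \<le> a"
  shows "(\<integral>\<^sup>+ z. ennreal (\<bar>b z\<bar> powr r) * indicator B z \<partial>lborel) \<le> ennreal (C0 r \<mu> (\<mu> * \<mu> + KB + 1) * (1 + a powr r))"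
proof -
  define Df where "Df y = (\<integral>\<^sup>+ z. ennreal (\<bar>b y - b z\<bar> powr r) * indicator B z \<partial>lborel)" for y
  define Dq where "Dq y = (\<integral>\<^sup>+ z. ennreal (\<bar>b y - b z\<bar> powr q) * indicator B z \<partial>lborel)" for y
  have Dfm[measurable]: "Df \<in> borel_measurable lborel" unfolding Df_def
    by (rule lborel.borel_measurable_nn_integral) measurable
  have Dqm[measurable]: "Dq \<in> borel_measurable lborel" unfolding Dq_def
    by (rule lborel.borel_measurable_nn_integral) measurable
  have DfDq: "Df y \<le> ennreal \<mu> + Dq y" for y
  proof -
    have "Df y \<le> (\<integral>\<^sup>+ z. indicator B z + ennreal (\<bar>b y - b z\<bar> powr q) * indicator B z \<partial>lborel)"
      unfolding Df_def
    proof (rule nn_integral_mono)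
      fix z
      have "\<bar>b y - b z\<bar> powr r \<le> 1 + \<bar>b y - b z\<bar> powr q"
      proof (cases "\<bar>b y - b z\<bar> \<le> 1")
        case True
        then have "\<bar>b y - b z\<bar> powr r \<le> 1" using r powr_mono2[of r "\<bar>b y - b z\<bar>" 1] by simp
        then show ?thesis by (smt (verit) powr_ge_zero)
      next
        case False
        then have "\<bar>b y - b z\<bar> powr r \<le> \<bar>b y - b z\<bar> powr q" using r by (intro powr_mono) auto
        then show ?thesis by simp
      qed
      then have "ennreal (\<bar>b y - b z\<bar> powr r) \<le> 1 + ennreal (\<bar>b y - b z\<bar> powr q)"
        by (metis ennreal_le_iff ennreal_plus ennreal_1 powr_ge_zero add_nonneg_nonneg zero_le_one ennreal_leI)
      then show "ennreal (\<bar>b y - b z\<bar> powr r) * indicator B z \<le> indicator B z + ennreal (\<bar>b y - b z\<bar> powr q) * indicator B z"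
        by (auto simp: indicator_def)
    qed
    also have "\<dots> = emeasure lborel B + Dq y"
      unfolding Dq_def using nn_integral_indicator[OF B] by (subst nn_integral_add) auto
    finally show ?thesis using mu by simp
  qed
  define D where "D = (\<integral>\<^sup>+ y. Df y * indicator B y \<partial>lborel)"
  have "D \<le> (\<integral>\<^sup>+ y. ennreal \<mu> * indicator B y + Dq y * indicator B y \<partial>lborel)"
    unfolding D_def by (rule nn_integral_mono) (use DfDq in \<open>auto simp: indicator_def\<close>)
  also have "\<dots> = ennreal \<mu> * ennreal \<mu> + (\<integral>\<^sup>+ y. Dq y * indicator B y \<partial>lborel)"
    using mu nn_integral_cmult_indicator[OF B, of "ennreal \<mu>"] by (subst nn_integral_add) auto
  also have "\<dots> \<le> ennreal \<mu> * ennreal \<mu> + ennreal KB"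
    using hB unfolding Dq_def by (intro add_left_mono) auto
  also have "\<dots> = ennreal (\<mu> * \<mu> + KB)" using mu KB by (simp add: ennreal_mult ennreal_plus)
  finally have Dle: "D \<le> ennreal (\<mu> * \<mu> + KB)" .
  have Dtop: "D \<noteq> top" using Dle by (auto simp: top_unique)
  define d where "d = enn2real D"
  have d: "D = ennreal d" "0 \<le> d" "d \<le> \<mu> * \<mu> + KB"
  proof -
    show D: "D = ennreal d" unfolding d_def using Dtop by (simp add: ennreal_enn2real_if)
    show "0 \<le> d" by (simp add: d_def)
    have "0 \<le> \<mu> * \<mu> + KB" using mu KB by simp
    then show "d \<le> \<mu> * \<mu> + KB" using Dle unfolding D using ennreal_le_iff by blast
  qed
  define c where "c = (a + d + 1) / \<mu>"
  have c0: "0 \<le> c" using a d mu by (simp add: c_def)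
  have "\<exists>y0\<in>B. ennreal \<bar>b y0\<bar> + Df y0 \<le> ennreal c"
  proof (rule ccontr)
    assume "\<not> ?thesis"
    then have lt: "y \<in> B \<Longrightarrow> ennreal c < ennreal \<bar>b y\<bar> + Df y" for y by (auto simp: not_le)
    have "ennreal (a + d + 1) = ennreal c * emeasure lborel B"
      using mu c0 a d by (simp add: c_def ennreal_mult[symmetric])
    also have "\<dots> = (\<integral>\<^sup>+ y. ennreal c * indicator B y \<partial>lborel)" by (simp add: nn_integral_cmult_indicator[OF B])
    also have "\<dots> \<le> (\<integral>\<^sup>+ y. ennreal \<bar>b y\<bar> * indicator B y + Df y * indicator B y \<partial>lborel)"
      by (rule nn_integral_mono) (use lt in \<open>auto simp: indicator_def less_imp_le\<close>)
    also have "\<dots> = ennreal a + ennreal d"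
      using a d by (subst nn_integral_add) (auto simp: D_def)
    also have "\<dots> = ennreal (a + d)" using a d by (simp add: ennreal_plus)
    finally show False using a d by simp
  qed
  then obtain y0 where y0: "y0 \<in> B" "ennreal \<bar>b y0\<bar> + Df y0 \<le> ennreal c" by blast
  have "ennreal \<bar>b y0\<bar> \<le> ennreal c"
    using order_trans[OF _ y0(2), of "ennreal \<bar>b y0\<bar>"] by simp
  then have by0: "\<bar>b y0\<bar> \<le> c" using c0 by (simp add: ennreal_le_iff)
  have Dfy0: "Df y0 \<le> ennreal c" using order_trans[OF _ y0(2), of "Df y0"] by simp
  have "(\<integral>\<^sup>+ z. ennreal (\<bar>b z\<bar> powr r) * indicator B z \<partial>lborel)
      \<le> (\<integral>\<^sup>+ z. ennreal (2 powr r) * (ennreal (\<bar>b y0 - b z\<bar> powr r) * indicator B z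
           + ennreal (\<bar>b y0\<bar> powr r) * indicator B z) \<partial>lborel)"
  proof (rule nn_integral_mono)
    fix z
    have "\<bar>b z\<bar> powr r \<le> 2 powr r * (\<bar>b y0 - b z\<bar> powr r + \<bar>b y0\<bar> powr r)"
      using r by (intro powr_sum_le) auto
    then have "ennreal (\<bar>b z\<bar> powr r) \<le> ennreal (2 powr r) * (ennreal (\<bar>b y0 - b z\<bar> powr r) + ennreal (\<bar>b y0\<bar> powr r))"
      by (simp add: ennreal_mult[symmetric] ennreal_plus[symmetric] del: ennreal_plus)
    then show "ennreal (\<bar>b z\<bar> powr r) * indicator B z \<le> ennreal (2 powr r) * (ennreal (\<bar>b y0 - b z\<bar> powr r) * indicator B z
           + ennreal (\<bar>b y0\<bar> powr r) * indicator B z)"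
      by (auto simp: indicator_def)
  qed
  also have "\<dots> = ennreal (2 powr r) * (Df y0 + ennreal (\<bar>b y0\<bar> powr r) * emeasure lborel B)"
    unfolding Df_def using nn_integral_cmult_indicator[OF B, of "ennreal (\<bar>b y0\<bar> powr r)"]
    by (subst nn_integral_cmult) (auto simp: nn_integral_add)
  also have "\<dots> \<le> ennreal (2 powr r) * (ennreal c + ennreal (c powr r) * ennreal \<mu>)"
  proof -
    have "ennreal (\<bar>b y0\<bar> powr r) \<le> ennreal (c powr r)"
      by (rule ennreal_leI, rule powr_mono2) (use r by0 in auto)
    then have "ennreal (\<bar>b y0\<bar> powr r) * ennreal \<mu> \<le> ennreal (c powr r) * ennreal \<mu>"
      by (rule mult_right_mono) simp
    then show ?thesis using Dfy0 mu by (intro mult_left_mono add_mono) auto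
  qed
  also have "\<dots> = ennreal (2 powr r * (c + c powr r * \<mu>))"
    using c0 mu by (simp add: ennreal_mult[symmetric] ennreal_plus[symmetric] del: ennreal_plus)
  also have "\<dots> \<le> ennreal (C0 r \<mu> (\<mu> * \<mu> + KB + 1) * (1 + a powr r))"
  proof (rule ennreal_leI, rule final_arith[OF r(1) mu(2) _ a(2) c0])
    show "0 \<le> \<mu> * \<mu> + KB + 1" using KB by simp
    show "c \<le> (a + (\<mu> * \<mu> + KB + 1)) / \<mu>" using d mu by (simp add: c_def divide_right_mono)
  qed
  finally show ?thesis .
qed

lemma enn_powr_measurable[measurable]:
  assumes f[measurable]: "f \<in> borel_measurable M"
  shows "(\<lambda>x. enn_powr (f x) r) \<in> borel_measurable M"
proof -
  have [measurable]: "{x \<in> space M. f x = \<infinity>} \<in> sets M"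
  proof -
    have "{x \<in> space M. f x = \<infinity>} = f -` {\<infinity>} \<inter> space M" by auto
    also have "\<dots> \<in> sets M" by (rule measurable_sets[OF f]) simp
    finally show ?thesis .
  qed
  show ?thesis unfolding enn_powr_def by measurable
qed

lemma enn_powr_mono: "e1 \<le> e2 \<Longrightarrow> 0 \<le> r \<Longrightarrow> enn_powr e1 r \<le> enn_powr e2 r"
  unfolding enn_powr_def
  by (auto simp: top_unique less_top intro!: ennreal_leI powr_mono2 enn2real_mono)

lemma enn_powr_ennreal: "0 \<le> a \<Longrightarrow> enn_powr (ennreal a) r = ennreal (a powr r)"
  by (simp add: enn_powr_def)

lemma enn_powr_top: "enn_powr top r = top"
  by (simp add: enn_powr_def)

lemma C0_pos: "0 < \<mu> \<Longrightarrow> 0 \<le> K1 \<Longrightarrow> 0 < C0 r \<mu> K1"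
  unfolding C0_def by (intro mult_pos_pos add_pos_nonneg) auto

lemma translate_ball_nn:
  fixes b :: "'b::euclidean_space \<Rightarrow> real"
  assumes bm: "b \<in> borel_measurable lborel"
  shows "(\<integral>\<^sup>+ y. ennreal \<bar>b y\<bar> * indicator (ball x0 1) y \<partial>lborel) =
    (\<integral>\<^sup>+ y. ennreal \<bar>b (x0 + y)\<bar> * indicator (ball 0 1) y \<partial>lborel)"
proof -
  have "(\<integral>\<^sup>+ y. ennreal \<bar>b y\<bar> * indicator (ball x0 1) y \<partial>lborel) =
      (\<integral>\<^sup>+ y. ennreal \<bar>b y\<bar> * indicator (ball x0 1) y \<partial>distr lborel borel ((+) x0))"
    by (simp add: lborel_distr_plus)
  also have "\<dots> = (\<integral>\<^sup>+ y. ennreal \<bar>b (x0 + y)\<bar> * indicator (ball x0 1) (x0 + y) \<partial>lborel)"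
  proof -
    have [measurable]: "b \<in> borel_measurable borel" using bm by simp
    have [measurable]: "ball x0 1 \<in> sets borel" by simp
    have [measurable]: "(\<lambda>y. ennreal \<bar>b y\<bar> * indicator (ball x0 1) y) \<in> borel_measurable borel"
      by measurable
    show ?thesis by (subst nn_integral_distr) auto
  qed
  also have "\<dots> = (\<integral>\<^sup>+ y. ennreal \<bar>b (x0 + y)\<bar> * indicator (ball 0 1) y \<partial>lborel)"
    by (rule nn_integral_cong) (auto simp: indicator_def dist_norm)
  finally show ?thesis .
qed

lemma ball_strip:
  fixes \<beta> :: "real \<Rightarrow> 'b::euclidean_space \<Rightarrow> real"
  assumes \<beta>m: "(\<lambda>z. \<beta> (fst z) (snd z)) \<in> borel_measurable (lborel \<Otimes>\<^sub>M lborel)"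
    and r: "1 \<le> r" "r \<le> q" and rho: "0 < \<rho>1" "\<rho>1 \<le> 1" and KB: "0 \<le> KB"
    and hA: "(\<integral>\<^sup>+ t. enn_powr (\<integral>\<^sup>+ y. ennreal \<bar>\<beta> t (x0 + y)\<bar> * indicator (ball 0 1) y \<partial>lborel) r
               * indicator {-\<tau>..\<tau>} t \<partial>lborel) < \<infinity>"
    and hB: "\<And>t. (\<integral>\<^sup>+ y. (\<integral>\<^sup>+ z. ennreal (\<bar>\<beta> t y - \<beta> t z\<bar> powr q) * indicator (ball x0 \<rho>1) z \<partial>lborel)
               * indicator (ball x0 \<rho>1) y \<partial>lborel) \<le> ennreal KB"
  shows "(\<integral>\<^sup>+ z. ennreal (\<bar>\<beta> (fst z) (snd z)\<bar> powr r) * indicator ({-\<tau>..\<tau>} \<times> ball x0 \<rho>1) z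
            \<partial>(lborel \<Otimes>\<^sub>M lborel)) < \<infinity>"
proof -
  define B where "B = ball x0 \<rho>1"
  have Bm[measurable]: "B \<in> sets lborel" by (simp add: B_def)
  define \<mu> where "\<mu> = measure lborel B"
  have muE: "emeasure lborel B = ennreal \<mu>"
    unfolding \<mu>_def B_def using emeasure_lborel_ball_finite[of x0 \<rho>1]
    by (intro emeasure_eq_ennreal_measure) auto
  have mu0: "0 < \<mu>" unfolding \<mu>_def B_def using content_ball_pos[OF rho(1)] by simp
  define C where "C = C0 r \<mu> (\<mu> * \<mu> + KB + 1)"
  have C0: "0 < C" unfolding C_def using mu0 KB by (intro C0_pos) auto
  have \<beta>t[measurable]: "(\<beta> t) \<in> borel_measurable lborel" for t
    using measurable_Pair2[OF \<beta>m, of t] by simp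
  define A' where "A' t = (\<integral>\<^sup>+ y. ennreal \<bar>\<beta> t (x0 + y)\<bar> * indicator (ball 0 1) y \<partial>lborel)" for t
  have shift: "(\<lambda>z. (fst z, x0 + snd z)) \<in> measurable (lborel \<Otimes>\<^sub>M lborel) (lborel \<Otimes>\<^sub>M lborel :: (real \<times> 'b) measure)"
    by measurable
  have \<beta>sh: "(\<lambda>z. \<beta> (fst z) (x0 + snd z)) \<in> borel_measurable (lborel \<Otimes>\<^sub>M lborel)"
    using measurable_compose[OF shift \<beta>m] by simp
  have A'm: "A' \<in> borel_measurable lborel" unfolding A'_def
  proof (rule lborel.borel_measurable_nn_integral)
    note \<beta>sh[measurable]
    have [measurable]: "ball 0 1 \<in> sets (borel :: 'b measure)" by simp
    show "case_prod (\<lambda>t y. ennreal \<bar>\<beta> t (x0 + y)\<bar> * indicator (ball 0 1) y) \<in> borel_measurable (lborel \<Otimes>\<^sub>M lborel)"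
      unfolding split_beta' by measurable
  qed
  have per_t: "(\<integral>\<^sup>+ x. ennreal (\<bar>\<beta> t x\<bar> powr r) * indicator B x \<partial>lborel)
      \<le> ennreal C * (1 + enn_powr (A' t) r)" for t
  proof -
    define A where "A = (\<integral>\<^sup>+ y. ennreal \<bar>\<beta> t y\<bar> * indicator B y \<partial>lborel)"
    have "A \<le> (\<integral>\<^sup>+ y. ennreal \<bar>\<beta> t y\<bar> * indicator (ball x0 1) y \<partial>lborel)"
      unfolding A_def B_def using rho by (intro nn_integral_mono) (auto simp: indicator_def)
    also have "\<dots> = A' t" unfolding A'_def by (rule translate_ball_nn) simp
    finally have AA': "A \<le> A' t" .
    show ?thesis
    proof (cases "A = top")
      case True
      then have "A' t = top" using AA' by (simp add: top_unique)
      then show ?thesis using C0 by (simp add: enn_powr_top ennreal_mult_top)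
    next
      case False
      define a where "a = enn2real A"
      have Aa: "A = ennreal a" unfolding a_def using False by (simp add: ennreal_enn2real_if)
      have a0: "0 \<le> a" by (simp add: a_def)
      have "(\<integral>\<^sup>+ x. ennreal (\<bar>\<beta> t x\<bar> powr r) * indicator B x \<partial>lborel) \<le> ennreal (C * (1 + a powr r))"
        unfolding C_def
        by (rule ball_bound[OF \<beta>t Bm muE mu0 r KB _ _ a0]) (use hB[of t] Aa in \<open>auto simp: B_def A_def\<close>)
      also have "\<dots> = ennreal C * (1 + enn_powr A r)"
        using C0 a0 by (simp add: Aa enn_powr_ennreal ennreal_mult ennreal_plus)
      also have "\<dots> \<le> ennreal C * (1 + enn_powr (A' t) r)"
        using AA' r by (intro mult_left_mono add_left_mono enn_powr_mono) auto
      finally show ?thesis .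
    qed
  qed
  have "(\<integral>\<^sup>+ z. ennreal (\<bar>\<beta> (fst z) (snd z)\<bar> powr r) * indicator ({-\<tau>..\<tau>} \<times> B) z \<partial>(lborel \<Otimes>\<^sub>M lborel))
      = (\<integral>\<^sup>+ t. \<integral>\<^sup>+ x. ennreal (\<bar>\<beta> t x\<bar> powr r) * indicator ({-\<tau>..\<tau>} \<times> B) (t, x) \<partial>lborel \<partial>lborel)"
  proof -
    note \<beta>m[measurable]
    have m: "(\<lambda>z. ennreal (\<bar>\<beta> (fst z) (snd z)\<bar> powr r) * indicator ({-\<tau>..\<tau>} \<times> B) z)
        \<in> borel_measurable (lborel \<Otimes>\<^sub>M lborel)" by measurable
    show ?thesis using lborel.nn_integral_fst[OF m] by simp
  qed
  also have "\<dots> \<le> (\<integral>\<^sup>+ t. ennreal C * indicator {-\<tau>..\<tau>} t + ennreal C * (enn_powr (A' t) r * indicator {-\<tau>..\<tau>} t) \<partial>lborel)"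
  proof (rule nn_integral_mono)
    fix t
    show "(\<integral>\<^sup>+ x. ennreal (\<bar>\<beta> t x\<bar> powr r) * indicator ({-\<tau>..\<tau>} \<times> B) (t, x) \<partial>lborel)
        \<le> ennreal C * indicator {-\<tau>..\<tau>} t + ennreal C * (enn_powr (A' t) r * indicator {-\<tau>..\<tau>} t)"
    proof (cases "t \<in> {-\<tau>..\<tau>}")
      case True
      have "(\<integral>\<^sup>+ x. ennreal (\<bar>\<beta> t x\<bar> powr r) * indicator ({-\<tau>..\<tau>} \<times> B) (t, x) \<partial>lborel)
          = (\<integral>\<^sup>+ x. ennreal (\<bar>\<beta> t x\<bar> powr r) * indicator B x \<partial>lborel)"
        using True by (intro nn_integral_cong) (auto simp: indicator_def)
      also have "\<dots> \<le> ennreal C * (1 + enn_powr (A' t) r)" by (rule per_t)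
      finally show ?thesis using True by (simp add: distrib_left)
    next
      case False
      have "(\<integral>\<^sup>+ x. ennreal (\<bar>\<beta> t x\<bar> powr r) * indicator ({-\<tau>..\<tau>} \<times> B) (t, x) \<partial>lborel) = (\<integral>\<^sup>+ x. (0::ennreal) \<partial>(lborel::'b measure))"
        using False by (intro nn_integral_cong) (auto simp: indicator_def)
      then show ?thesis by simp
    qed
  qed
  also have "\<dots> = ennreal C * emeasure lborel {-\<tau>..\<tau>} +
      ennreal C * (\<integral>\<^sup>+ t. enn_powr (A' t) r * indicator {-\<tau>..\<tau>} t \<partial>lborel)"
    using A'm by (subst nn_integral_add) (auto simp: nn_integral_cmult nn_integral_cmult_indicator)
  also have "\<dots> < \<infinity>"
    using hA unfolding A'_def[symmetric]
    by (simp add: ennreal_mult_less_top emeasure_lborel_Icc_eq)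
  finally show ?thesis unfolding B_def .
qed

lemma coef_Lp:
  fixes \<beta> :: "real \<Rightarrow> 'b::euclidean_space \<Rightarrow> real" and \<psi> :: "'b \<Rightarrow> real"
  assumes \<beta>m: "(\<lambda>z. \<beta> (fst z) (snd z)) \<in> borel_measurable (lborel \<Otimes>\<^sub>M lborel)"
    and r: "1 \<le> r" "r \<le> q" and rho: "0 < \<rho>1" "\<rho>1 \<le> 1" and KB: "0 \<le> KB"
    and hA: "\<And>x0. (\<integral>\<^sup>+ t. enn_powr (\<integral>\<^sup>+ y. ennreal \<bar>\<beta> t (x0 + y)\<bar> * indicator (ball 0 1) y \<partial>lborel) r
               * indicator {-\<tau>..\<tau>} t \<partial>lborel) < \<infinity>"
    and hB: "\<And>t x0. (\<integral>\<^sup>+ y. (\<integral>\<^sup>+ z. ennreal (\<bar>\<beta> t y - \<beta> t z\<bar> powr q) * indicator (ball x0 \<rho>1) z \<partial>lborel)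
               * indicator (ball x0 \<rho>1) y \<partial>lborel) \<le> ennreal KB"
    and S: "compact S" and \<psi>m: "\<psi> \<in> borel_measurable lborel" and \<psi>b: "\<And>x. \<bar>\<psi> x\<bar> \<le> B\<psi> * indicator S x"
  shows "Lp r (lborel \<Otimes>\<^sub>M lborel) (\<lambda>(s, x). indicator {-\<tau>..\<tau>} s * \<beta> s x * \<psi> x)"
proof -
  let ?N = "lborel \<Otimes>\<^sub>M lborel :: (real \<times> 'b) measure"
  define B1 where "B1 = \<bar>B\<psi>\<bar>"
  have B0: "0 \<le> B1" by (simp add: B1_def)
  have \<psi>b1: "\<bar>\<psi> x\<bar> \<le> B1 * indicator S x" for x
    using \<psi>b[of x] by (auto simp: B1_def indicator_def)
  obtain F where F: "F \<subseteq> S" "finite F" "S \<subseteq> (\<Union>c\<in>F. ball c \<rho>1)"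
    using compactE_image[OF S, of S "\<lambda>c. ball c \<rho>1"] rho by force
  note \<beta>m[measurable]
  have Sm[measurable]: "S \<in> sets borel" using S by (simp add: compact_imp_closed borel_closed)
  define g where "g z = ennreal (\<bar>\<beta> (fst z) (snd z)\<bar> powr r)" for z
  have gm[measurable]: "g \<in> borel_measurable ?N" unfolding g_def by measurable
  have "(\<integral>\<^sup>+ z. g z * indicator ({-\<tau>..\<tau>} \<times> S) z \<partial>?N)
      \<le> (\<integral>\<^sup>+ z. (\<Sum>c\<in>F. g z * indicator ({-\<tau>..\<tau>} \<times> ball c \<rho>1) z) \<partial>?N)"
  proof (rule nn_integral_mono)
    fix z show "g z * indicator ({-\<tau>..\<tau>} \<times> S) z \<le> (\<Sum>c\<in>F. g z * indicator ({-\<tau>..\<tau>} \<times> ball c \<rho>1) z)"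
    proof (cases "z \<in> {-\<tau>..\<tau>} \<times> S")
      case True
      then obtain c where c: "c \<in> F" "snd z \<in> ball c \<rho>1" using F(3) by (cases z) auto
      have "g z * indicator ({-\<tau>..\<tau>} \<times> S) z = g z * indicator ({-\<tau>..\<tau>} \<times> ball c \<rho>1) z"
        using True c by (cases z) (auto simp: indicator_def)
      also have "\<dots> \<le> (\<Sum>c\<in>F. g z * indicator ({-\<tau>..\<tau>} \<times> ball c \<rho>1) z)"
        by (rule member_le_sum[OF c(1)]) (auto simp: F(2))
      finally show ?thesis .
    qed (simp add: indicator_def)
  qed
  also have "\<dots> = (\<Sum>c\<in>F. \<integral>\<^sup>+ z. g z * indicator ({-\<tau>..\<tau>} \<times> ball c \<rho>1) z \<partial>?N)"
    by (rule nn_integral_sum) auto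
  also have "\<dots> < \<infinity>"
    using F(2) ball_strip[OF \<beta>m r rho KB hA hB] by (simp add: g_def less_top)
  finally have fin: "(\<integral>\<^sup>+ z. g z * indicator ({-\<tau>..\<tau>} \<times> S) z \<partial>?N) < \<infinity>" .
  have \<psi>m'[measurable]: "\<psi> \<in> borel_measurable borel" using \<psi>m by simp
  show ?thesis unfolding Lp_def
  proof
    show "(\<lambda>(s, x). indicator {-\<tau>..\<tau>} s * \<beta> s x * \<psi> x) \<in> borel_measurable ?N"
      unfolding split_beta' by measurable
    show "integrable ?N (\<lambda>z. \<bar>case z of (s, x) \<Rightarrow> indicator {-\<tau>..\<tau>} s * \<beta> s x * \<psi> x\<bar> powr r)"
    proof (rule integrableI_bounded)
      show "(\<lambda>z. \<bar>case z of (s, x) \<Rightarrow> indicator {-\<tau>..\<tau>} s * \<beta> s x * \<psi> x\<bar> powr r) \<in> borel_measurable ?N"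
        unfolding split_beta' by measurable
      have "(\<integral>\<^sup>+ z. ennreal (norm (\<bar>case z of (s, x) \<Rightarrow> indicator {-\<tau>..\<tau>} s * \<beta> s x * \<psi> x\<bar> powr r)) \<partial>?N)
          \<le> (\<integral>\<^sup>+ z. ennreal (B1 powr r) * (g z * indicator ({-\<tau>..\<tau>} \<times> S) z) \<partial>?N)"
      proof (rule nn_integral_mono)
        fix z :: "real \<times> 'b"
        obtain s x where z: "z = (s, x)" by (cases z)
        show "ennreal (norm (\<bar>case z of (s, x) \<Rightarrow> indicator {-\<tau>..\<tau>} s * \<beta> s x * \<psi> x\<bar> powr r))
            \<le> ennreal (B1 powr r) * (g z * indicator ({-\<tau>..\<tau>} \<times> S) z)"
        proof (cases "s \<in> {-\<tau>..\<tau>} \<and> x \<in> S")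
          case True
          have "\<bar>\<beta> s x * \<psi> x\<bar> \<le> \<bar>\<beta> s x\<bar> * B1"
            using \<psi>b1[of x] True by (simp add: abs_mult mult_left_mono)
          then have "\<bar>\<beta> s x * \<psi> x\<bar> powr r \<le> (\<bar>\<beta> s x\<bar> * B1) powr r" using r by (intro powr_mono2) auto
          also have "\<dots> = B1 powr r * \<bar>\<beta> s x\<bar> powr r" using B0 by (simp add: powr_mult)
          finally show ?thesis using True B0
            by (simp add: z g_def indicator_def ennreal_mult[symmetric] abs_mult)
        next
          case False
          then have "\<psi> x = 0 \<or> s \<notin> {-\<tau>..\<tau>}" using \<psi>b1[of x] by (auto simp: indicator_def)
          then show ?thesis using r by (auto simp: z indicator_def)
        qed
      qed
      also have "\<dots> = ennreal (B1 powr r) * (\<integral>\<^sup>+ z. g z * indicator ({-\<tau>..\<tau>} \<times> S) z \<partial>?N)"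
        by (rule nn_integral_cmult) measurable
      also have "\<dots> < \<infinity>" using fin by (simp add: ennreal_mult_less_top)
      finally show "(\<integral>\<^sup>+ z. ennreal (norm (\<bar>case z of (s, x) \<Rightarrow> indicator {-\<tau>..\<tau>} s * \<beta> s x * \<psi> x\<bar> powr r)) \<partial>?N) < \<infinity>" .
    qed
  qed
qed

lemma smooth_diff: "smooth_fun f \<Longrightarrow> f differentiable (at x)"
  by (erule smooth_fun.cases) auto

lemma smooth_pd: "smooth_fun f \<Longrightarrow> smooth_fun (partial_deriv i f)"
  by (erule smooth_fun.cases) auto

lemma smooth_cont: "smooth_fun f \<Longrightarrow> continuous_on UNIV f"
  by (rule continuous_at_imp_continuous_on)
     (use differentiable_imp_continuous_within smooth_diff in blast)

lemma smooth_meas: "smooth_fun f \<Longrightarrow> f \<in> borel_measurable lborel"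
  using borel_measurable_continuous_onI[OF smooth_cont] by simp

lemma cont_compact_bound:
  fixes f :: "'a::topological_space \<Rightarrow> real"
  assumes "continuous_on UNIV f" "compact S" "\<And>x. x \<notin> S \<Longrightarrow> f x = 0"
  shows "\<exists>B. \<forall>x. \<bar>f x\<bar> \<le> B * indicator S x"
proof -
  have "compact (f ` S)" by (rule compact_continuous_image[OF continuous_on_subset[OF assms(1)] assms(2)]) auto
  then obtain B where B: "\<And>y. y \<in> f ` S \<Longrightarrow> norm y \<le> B" using compact_imp_bounded bounded_iff by metis
  show ?thesis
    by (rule exI[of _ B]) (use B assms(3) in \<open>auto simp: indicator_def\<close>)
qed

lemma pd_zero_outside:
  fixes \<phi> :: "real^'n::finite \<Rightarrow> real"
  assumes sm: "smooth_fun \<phi>" and x: "x \<notin> closure {x. \<phi> x \<noteq> 0}"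
  shows "partial_deriv i \<phi> x = 0"
proof -
  let ?U = "- closure {x. \<phi> x \<noteq> 0}"
  have "((\<lambda>_. 0) has_derivative (\<lambda>_. 0)) (at x)" by (rule has_derivative_const)
  then have z: "(\<phi> has_derivative (\<lambda>_. 0)) (at x)"
    by (rule has_derivative_transform_within_open[of _ _ _ _ ?U]) (use x closure_subset[of "{x. \<phi> x \<noteq> 0}"] in auto)
  have "(\<phi> has_derivative frechet_derivative \<phi> (at x)) (at x)"
    using smooth_diff[OF sm] frechet_derivative_works by blast
  then have "frechet_derivative \<phi> (at x) = (\<lambda>_. 0)" using z by (rule has_derivative_unique)
  then show ?thesis by (simp add: partial_deriv_def)
qed

lemma test_fun_props:
  fixes \<phi> :: "real^'n::finite \<Rightarrow> real"
  assumes "test_fun \<phi>"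
  shows "\<phi> \<in> borel_measurable lborel" "\<exists>S B. compact S \<and> (\<forall>x. \<bar>\<phi> x\<bar> \<le> B * indicator S x)"
    "partial_deriv i \<phi> \<in> borel_measurable lborel"
    "\<exists>S B. compact S \<and> (\<forall>x. \<bar>partial_deriv i \<phi> x\<bar> \<le> B * indicator S x)"
proof -
  have sm: "smooth_fun \<phi>" and S: "compact (closure {x. \<phi> x \<noteq> 0})"
    using assms by (auto simp: test_fun_def)
  show "\<phi> \<in> borel_measurable lborel" by (rule smooth_meas[OF sm])
  show "partial_deriv i \<phi> \<in> borel_measurable lborel" by (rule smooth_meas[OF smooth_pd[OF sm]])
  show "\<exists>S B. compact S \<and> (\<forall>x. \<bar>\<phi> x\<bar> \<le> B * indicator S x)"
  proof -
    have "\<phi> x = 0" if "x \<notin> closure {x. \<phi> x \<noteq> 0}" for x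
      using that closure_subset[of "{x. \<phi> x \<noteq> 0}"] by auto
    from cont_compact_bound[OF smooth_cont[OF sm] S this] S show ?thesis by blast
  qed
  show "\<exists>S B. compact S \<and> (\<forall>x. \<bar>partial_deriv i \<phi> x\<bar> \<le> B * indicator S x)"
  proof -
    from cont_compact_bound[OF smooth_cont[OF smooth_pd[OF sm]] S pd_zero_outside[OF sm]] S show ?thesis by blast
  qed
qed

lemma meas_conv:
  fixes \<beta> :: "real \<Rightarrow> 'b::euclidean_space \<Rightarrow> real"
  assumes "(\<lambda>(t, x). \<beta> t x) \<in> borel_measurable borel"
  shows "(\<lambda>(t, x). \<beta> t x) \<in> borel_measurable (lborel \<Otimes>\<^sub>M lborel)"
    and "(\<lambda>z. \<beta> (fst z) (snd z)) \<in> borel_measurable (lborel \<Otimes>\<^sub>M lborel)"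
  using assms by (simp_all add: lborel_prod split_beta')

lemma hA_from:
  fixes \<beta> :: "real \<Rightarrow> 'b::euclidean_space \<Rightarrow> real" and F :: "real \<Rightarrow> 'b \<Rightarrow> real"
  assumes le: "\<And>t w. \<bar>\<beta> t w\<bar> \<le> F t w" and r: "0 \<le> r"
    and A: "\<And>x T1 T2. (\<integral>\<^sup>+ t\<in>{T1..T2}. enn_powr (\<integral>\<^sup>+ y\<in>ball 0 1. ennreal (F t (x + y)) \<partial>lborel) r \<partial>lborel) < \<infinity>"
  shows "(\<integral>\<^sup>+ t. enn_powr (\<integral>\<^sup>+ y. ennreal \<bar>\<beta> t (x0 + y)\<bar> * indicator (ball 0 1) y \<partial>lborel) r
               * indicator {-\<tau>..\<tau>} t \<partial>lborel) < \<infinity>"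
proof -
  have "(\<integral>\<^sup>+ t. enn_powr (\<integral>\<^sup>+ y. ennreal \<bar>\<beta> t (x0 + y)\<bar> * indicator (ball 0 1) y \<partial>lborel) r
               * indicator {-\<tau>..\<tau>} t \<partial>lborel)
      \<le> (\<integral>\<^sup>+ t\<in>{-\<tau>..\<tau>}. enn_powr (\<integral>\<^sup>+ y\<in>ball 0 1. ennreal (F t (x0 + y)) \<partial>lborel) r \<partial>lborel)"
  proof (rule nn_integral_mono)
    fix t
    have "(\<integral>\<^sup>+ y. ennreal \<bar>\<beta> t (x0 + y)\<bar> * indicator (ball 0 1) y \<partial>lborel)
        \<le> (\<integral>\<^sup>+ y\<in>ball 0 1. ennreal (F t (x0 + y)) \<partial>lborel)"
      by (rule nn_integral_mono) (use le in \<open>auto simp: indicator_def intro!: ennreal_leI\<close>)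
    then show "enn_powr (\<integral>\<^sup>+ y. ennreal \<bar>\<beta> t (x0 + y)\<bar> * indicator (ball 0 1) y \<partial>lborel) r
               * indicator {-\<tau>..\<tau>} t
        \<le> enn_powr (\<integral>\<^sup>+ y\<in>ball 0 1. ennreal (F t (x0 + y)) \<partial>lborel) r * indicator {-\<tau>..\<tau>} t"
      by (intro mult_right_mono enn_powr_mono r) auto
  qed
  also have "\<dots> < \<infinity>" by (rule A)
  finally show ?thesis .
qed

lemma hB_from:
  fixes \<beta> :: "real \<Rightarrow> 'b::euclidean_space \<Rightarrow> real" and F :: "real \<Rightarrow> 'b \<Rightarrow> 'b \<Rightarrow> real"
  assumes le: "\<And>t y z. \<bar>\<beta> t y - \<beta> t z\<bar> powr q \<le> F t y z"
    and B: "\<And>t x. (\<integral>\<^sup>+ y\<in>ball x \<rho>1. \<integral>\<^sup>+ z\<in>ball x \<rho>1. ennreal (F t y z) \<partial>lborel \<partial>lborel) \<le> ennreal KB"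
  shows "(\<integral>\<^sup>+ y. (\<integral>\<^sup>+ z. ennreal (\<bar>\<beta> t y - \<beta> t z\<bar> powr q) * indicator (ball x0 \<rho>1) z \<partial>lborel)
               * indicator (ball x0 \<rho>1) y \<partial>lborel) \<le> ennreal KB"
proof -
  have "(\<integral>\<^sup>+ y. (\<integral>\<^sup>+ z. ennreal (\<bar>\<beta> t y - \<beta> t z\<bar> powr q) * indicator (ball x0 \<rho>1) z \<partial>lborel)
               * indicator (ball x0 \<rho>1) y \<partial>lborel)
      \<le> (\<integral>\<^sup>+ y\<in>ball x0 \<rho>1. \<integral>\<^sup>+ z\<in>ball x0 \<rho>1. ennreal (F t y z) \<partial>lborel \<partial>lborel)"
    by (intro nn_integral_mono mult_right_mono) (use le in \<open>auto intro!: ennreal_leI\<close>)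
  also have "\<dots> \<le> ennreal KB" by (rule B)
  finally show ?thesis .
qed

theorem lemma6p2:
  fixes p q K \<rho>0 \<rho>1 \<gamma> \<tau> :: real
    and a :: "'n::finite \<Rightarrow> 'n \<Rightarrow> real \<Rightarrow> real^'n \<Rightarrow> real"
    and frb b :: "'n \<Rightarrow> real \<Rightarrow> real^'n \<Rightarrow> real"
    and c :: "real \<Rightarrow> real^'n \<Rightarrow> real"
    and \<phi> :: "real^'n \<Rightarrow> real"
    and us :: "nat \<Rightarrow> real \<Rightarrow> real^'n \<Rightarrow> real"
    and Dus :: "nat \<Rightarrow> 'n \<Rightarrow> real \<Rightarrow> real^'n \<Rightarrow> real"
    and u :: "real \<Rightarrow> real^'n \<Rightarrow> real"
    and Du :: "'n \<Rightarrow> real \<Rightarrow> real^'n \<Rightarrow> real"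
  assumes p: "1 < p"
    and K: "0 \<le> K"
    and rho0: "0 < \<rho>0" "\<rho>0 \<le> 1"
    and rho1: "0 < \<rho>1" "\<rho>1 \<le> 1"
    and q: "q > min (real CARD('n)) p" "q > min (real CARD('n)) (p / (p - 1))"
           "q \<ge> max (real CARD('n)) (max p (p / (p - 1)))"
    and gamma: "0 < \<gamma>" "\<gamma> \<le> 1"
    and A: "AssumptionA p a frb b c"
    and B: "AssumptionB q K \<rho>1 frb b c \<gamma>"
    and C: "AssumptionC \<rho>0 a \<gamma>"
    and phi: "test_fun \<phi>"
    and tau: "0 < \<tau>"
    and conv: "weak_conv_WW1p p us Dus u Du"
  shows
    "weak_conv_Lp p (restrict_space lborel {-\<tau>..\<tau>})
       (\<lambda>m t. LBINT s=0..t. \<integral>x. (\<Sum>i\<in>UNIV. chi m (b i s x) * Dus m i s x) * \<phi> x \<partial>lborel)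
       (\<lambda>t. LBINT s=0..t. \<integral>x. (\<Sum>i\<in>UNIV. b i s x * Du i s x) * \<phi> x \<partial>lborel)
   \<and> weak_conv_Lp p (restrict_space lborel {-\<tau>..\<tau>})
       (\<lambda>m t. LBINT s=0..t. \<integral>x. (\<Sum>i\<in>UNIV. chi m (frb i s x) * us m s x * partial_deriv i \<phi> x) \<partial>lborel)
       (\<lambda>t. LBINT s=0..t. \<integral>x. (\<Sum>i\<in>UNIV. frb i s x * u s x * partial_deriv i \<phi> x) \<partial>lborel)
   \<and> weak_conv_Lp p (restrict_space lborel {-\<tau>..\<tau>})
       (\<lambda>m t. LBINT s=0..t. \<integral>x. chi m (c s x) * us m s x * \<phi> x \<partial>lborel)
       (\<lambda>t. LBINT s=0..t. \<integral>x. c s x * u s x * \<phi> x \<partial>lborel)"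
proof -
  let ?N = "lborel \<Otimes>\<^sub>M lborel :: (real \<times> (real^'n)) measure"
  let ?r = "p / (p - 1)"
  have r1: "1 \<le> ?r" using p by (simp add: field_simps)
  have rq: "?r \<le> q" using q(3) by simp
  have q0: "0 \<le> q" using order_trans[OF _ q(3), of 0] by simp
  define KB where "KB = K * (if q > real CARD('n) then 1 else 0) + \<rho>1 ^ CARD('n) * \<gamma>"
  have KB: "0 \<le> KB" unfolding KB_def using K rho1 gamma by simp
  have mfrb: "\<And>i. (\<lambda>(t, x). frb i t x) \<in> borel_measurable borel"
    and mb: "\<And>i. (\<lambda>(t, x). b i t x) \<in> borel_measurable borel"
    and mc: "(\<lambda>(t, x). c t x) \<in> borel_measurable borel"
    and c0: "\<And>t x. c t x \<ge> 0"
    and A3: "\<And>x T1 T2. (\<integral>\<^sup>+ t\<in>{T1..T2}.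
         enn_powr (\<integral>\<^sup>+ y\<in>ball 0 1. ennreal (norm (\<chi> i. frb i t (x + y)) + norm (\<chi> i. b i t (x + y)) + c t (x + y)) \<partial>lborel)
                  (p / (p - 1)) \<partial>lborel) < \<infinity>"
    using A unfolding AssumptionA_def by blast+
  have B': "\<And>t x. (\<integral>\<^sup>+ y\<in>ball x \<rho>1. \<integral>\<^sup>+ z\<in>ball x \<rho>1.
         ennreal (norm ((\<chi> i. frb i t y) - (\<chi> i. frb i t z)) powr q
                + norm ((\<chi> i. b i t y) - (\<chi> i. b i t z)) powr q
                + \<bar>c t y - c t z\<bar> powr q) \<partial>lborel \<partial>lborel) \<le> ennreal KB"
    using B unfolding AssumptionB_def KB_def by blast
  define FA where "FA t w = norm (\<chi> i. frb i t w) + norm (\<chi> i. b i t w) + c t w" for t w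
  define FB where "FB t y z = norm ((\<chi> i. frb i t y) - (\<chi> i. frb i t z)) powr q
                + norm ((\<chi> i. b i t y) - (\<chi> i. b i t z)) powr q
                + \<bar>c t y - c t z\<bar> powr q" for t y z
  have A3': "\<And>x T1 T2. (\<integral>\<^sup>+ t\<in>{T1..T2}. enn_powr (\<integral>\<^sup>+ y\<in>ball 0 1. ennreal (FA t (x + y)) \<partial>lborel) ?r \<partial>lborel) < \<infinity>"
    unfolding FA_def by (rule A3)
  have B'': "\<And>t x. (\<integral>\<^sup>+ y\<in>ball x \<rho>1. \<integral>\<^sup>+ z\<in>ball x \<rho>1. ennreal (FB t y z) \<partial>lborel \<partial>lborel) \<le> ennreal KB"
    unfolding FB_def by (rule B')
  have FAb: "\<bar>b i t w\<bar> \<le> FA t w" "\<bar>frb i t w\<bar> \<le> FA t w" "\<bar>c t w\<bar> \<le> FA t w" for i t w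
  proof -
    have g1: "\<bar>b i t w\<bar> \<le> norm (\<chi> i. b i t w)" using component_le_norm_cart[of "\<chi> i. b i t w" i] by simp
    have g2: "\<bar>frb i t w\<bar> \<le> norm (\<chi> i. frb i t w)" using component_le_norm_cart[of "\<chi> i. frb i t w" i] by simp
    show "\<bar>b i t w\<bar> \<le> FA t w" "\<bar>frb i t w\<bar> \<le> FA t w" "\<bar>c t w\<bar> \<le> FA t w"
      using g1 g2 c0[of t w] norm_ge_zero[of "\<chi> i. b i t w"] norm_ge_zero[of "\<chi> i. frb i t w"]
      by (simp_all add: FA_def)
  qed
  have FBb: "\<bar>b i t y - b i t z\<bar> powr q \<le> FB t y z" "\<bar>frb i t y - frb i t z\<bar> powr q \<le> FB t y z"
    "\<bar>c t y - c t z\<bar> powr q \<le> FB t y z" for i t y z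
  proof -
    have g1: "\<bar>b i t y - b i t z\<bar> \<le> norm ((\<chi> i. b i t y) - (\<chi> i. b i t z))"
      using component_le_norm_cart[of "(\<chi> i. b i t y) - (\<chi> i. b i t z)" i] by simp
    have g2: "\<bar>frb i t y - frb i t z\<bar> \<le> norm ((\<chi> i. frb i t y) - (\<chi> i. frb i t z))"
      using component_le_norm_cart[of "(\<chi> i. frb i t y) - (\<chi> i. frb i t z)" i] by simp
    have h1: "\<bar>b i t y - b i t z\<bar> powr q \<le> norm ((\<chi> i. b i t y) - (\<chi> i. b i t z)) powr q"
      using g1 q0 by (intro powr_mono2) auto
    have h2: "\<bar>frb i t y - frb i t z\<bar> powr q \<le> norm ((\<chi> i. frb i t y) - (\<chi> i. frb i t z)) powr q"
      using g2 q0 by (intro powr_mono2) auto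
    have p1: "0 \<le> norm ((\<chi> i. frb i t y) - (\<chi> i. frb i t z)) powr q" by simp
    have p2: "0 \<le> norm ((\<chi> i. b i t y) - (\<chi> i. b i t z)) powr q" by simp
    have p3: "0 \<le> \<bar>c t y - c t z\<bar> powr q" by simp
    show "\<bar>b i t y - b i t z\<bar> powr q \<le> FB t y z" "\<bar>frb i t y - frb i t z\<bar> powr q \<le> FB t y z"
      "\<bar>c t y - c t z\<bar> powr q \<le> FB t y z"
      using h1 h2 p1 p2 p3 unfolding FB_def by linarith+
  qed
  have rho1': "0 < \<rho>1" "\<rho>1 \<le> 1" using rho1 by auto
  have r0: "0 \<le> ?r" using p by simp
  have Lpb: "Lp ?r ?N (\<lambda>(s, x). indicator {-\<tau>..\<tau>} s * b i s x * \<psi> x)"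
    if "\<psi> \<in> borel_measurable lborel" "compact S" "\<And>x. \<bar>\<psi> x\<bar> \<le> B\<psi> * indicator S x" for i \<psi> S B\<psi>
    apply (rule coef_Lp[where \<beta>="b i" and q=q and KB=KB])
               apply (rule meas_conv(2)[OF mb])
              apply (rule r1)
             apply (rule rq)
            apply (rule rho1'(1))
           apply (rule rho1'(2))
          apply (rule KB)
         apply (rule hA_from[OF FAb(1) r0 A3'])
        apply (rule hB_from[OF FBb(1) B''])
       apply (rule that(2))
      apply (rule that(1))
     apply (rule that(3))
    done
  have Lpfrb: "Lp ?r ?N (\<lambda>(s, x). indicator {-\<tau>..\<tau>} s * frb i s x * \<psi> x)"
    if "\<psi> \<in> borel_measurable lborel" "compact S" "\<And>x. \<bar>\<psi> x\<bar> \<le> B\<psi> * indicator S x" for i \<psi> S B\<psi>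
    apply (rule coef_Lp[where \<beta>="frb i" and q=q and KB=KB])
               apply (rule meas_conv(2)[OF mfrb])
              apply (rule r1)
             apply (rule rq)
            apply (rule rho1'(1))
           apply (rule rho1'(2))
          apply (rule KB)
         apply (rule hA_from[OF FAb(2) r0 A3'])
        apply (rule hB_from[OF FBb(2) B''])
       apply (rule that(2))
      apply (rule that(1))
     apply (rule that(3))
    done
  have Lpc: "Lp ?r ?N (\<lambda>(s, x). indicator {-\<tau>..\<tau>} s * c s x * \<psi> x)"
    if "\<psi> \<in> borel_measurable lborel" "compact S" "\<And>x. \<bar>\<psi> x\<bar> \<le> B\<psi> * indicator S x" for \<psi> S B\<psi>
    apply (rule coef_Lp[where \<beta>="c" and q=q and KB=KB])
               apply (rule meas_conv(2)[OF mc])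
              apply (rule r1)
             apply (rule rq)
            apply (rule rho1'(1))
           apply (rule rho1'(2))
          apply (rule KB)
         apply (rule hA_from[OF FAb(3) r0 A3'])
        apply (rule hB_from[OF FBb(3) B''])
       apply (rule that(2))
      apply (rule that(1))
     apply (rule that(3))
    done
  have phim: "\<phi> \<in> borel_measurable lborel" by (rule test_fun_props(1)[OF phi])
  obtain S\<phi> B\<phi> where S\<phi>: "compact S\<phi>" "\<And>x. \<bar>\<phi> x\<bar> \<le> B\<phi> * indicator S\<phi> x"
    using test_fun_props(2)[OF phi] by blast
  have pdm: "partial_deriv i \<phi> \<in> borel_measurable lborel" for i by (rule test_fun_props(3)[OF phi])
  have phimb: "\<phi> \<in> borel_measurable borel" using phim by simp
  have pdmb: "partial_deriv i \<phi> \<in> borel_measurable borel" for i using pdm by simp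
  have "\<forall>i. \<exists>SB. compact (fst SB) \<and> (\<forall>x. \<bar>partial_deriv i \<phi> x\<bar> \<le> snd SB * indicator (fst SB) x)"
    using test_fun_props(4)[OF phi] by fastforce
  from choice[OF this] obtain SB where
    SB: "\<And>i. compact (fst (SB i))" "\<And>i x. \<bar>partial_deriv i \<phi> x\<bar> \<le> snd (SB i) * indicator (fst (SB i)) x"
    by blast
  have wu: "weak_conv_Lp p ?N (\<lambda>m (t, x). us m t x) (\<lambda>(t, x). u t x)"
    and wD: "\<And>i. weak_conv_Lp p ?N (\<lambda>m (t, x). Dus m i t x) (\<lambda>(t, x). Du i t x)"
    using conv unfolding weak_conv_WW1p_def by blast+
  have C1: "weak_conv_Lp p (restrict_space lborel {-\<tau>..\<tau>})
     (\<lambda>m t. LBINT s=0..t. \<integral>x. (\<Sum>i\<in>UNIV. chi m (b i s x) * Dus m i s x * \<phi> x) \<partial>lborel)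
     (\<lambda>t. LBINT s=0..t. \<integral>x. (\<Sum>i\<in>UNIV. b i s x * Du i s x * \<phi> x) \<partial>lborel)"
    by (rule main_general[OF p tau finite_class.finite_UNIV, where \<beta>=b and \<psi>="\<lambda>i. \<phi>"])
       (auto intro: meas_conv(1)[OF mb] phim phimb Lpb[OF phim S\<phi>] wD)
  have C2: "weak_conv_Lp p (restrict_space lborel {-\<tau>..\<tau>})
     (\<lambda>m t. LBINT s=0..t. \<integral>x. (\<Sum>i\<in>UNIV. chi m (frb i s x) * us m s x * partial_deriv i \<phi> x) \<partial>lborel)
     (\<lambda>t. LBINT s=0..t. \<integral>x. (\<Sum>i\<in>UNIV. frb i s x * u s x * partial_deriv i \<phi> x) \<partial>lborel)"
    by (rule main_general[OF p tau finite_class.finite_UNIV, where \<beta>=frb and \<psi>="\<lambda>i. partial_deriv i \<phi>"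
          and Vs="\<lambda>m i. us m" and V="\<lambda>i. u"])
       (auto intro: meas_conv(1)[OF mfrb] pdm pdmb Lpfrb[OF pdm SB(1) SB(2)] wu)
  have C3': "weak_conv_Lp p (restrict_space lborel {-\<tau>..\<tau>})
     (\<lambda>m t. LBINT s=0..t. \<integral>x. (\<Sum>i\<in>{()}. chi m (c s x) * us m s x * \<phi> x) \<partial>lborel)
     (\<lambda>t. LBINT s=0..t. \<integral>x. (\<Sum>i\<in>{()}. c s x * u s x * \<phi> x) \<partial>lborel)"
    by (rule main_general[OF p tau, where I="{()}" and \<beta>="\<lambda>i. c" and \<psi>="\<lambda>i. \<phi>"
          and Vs="\<lambda>m i. us m" and V="\<lambda>i. u"])
       (auto intro: meas_conv(1)[OF mc] phim phimb Lpc[OF phim S\<phi>] wu)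
  have C3: "weak_conv_Lp p (restrict_space lborel {-\<tau>..\<tau>})
       (\<lambda>m t. LBINT s=0..t. \<integral>x. chi m (c s x) * us m s x * \<phi> x \<partial>lborel)
       (\<lambda>t. LBINT s=0..t. \<integral>x. c s x * u s x * \<phi> x \<partial>lborel)"
    using C3' by simp
  have C1': "weak_conv_Lp p (restrict_space lborel {-\<tau>..\<tau>})
       (\<lambda>m t. LBINT s=0..t. \<integral>x. (\<Sum>i\<in>UNIV. chi m (b i s x) * Dus m i s x) * \<phi> x \<partial>lborel)
       (\<lambda>t. LBINT s=0..t. \<integral>x. (\<Sum>i\<in>UNIV. b i s x * Du i s x) * \<phi> x \<partial>lborel)"
    using C1 by (simp add: sum_distrib_right)
  show ?thesis using C1' C2 C3 by blast
qed

end
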